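(* Let $n=2$ and let $(X,\mathbf h,\Lambda,\widetilde B)$ be a quantum seed, with $X'_2$ the second cluster variable of $\mu_2(X,\mathbf h,\Lambda,\widetilde B)$. Then $$\mathbb{ZP}[X_1,X_2^{\pm1}]\cap\mathbb{ZP}[X_1^{\pm1},X_2,X'_2]=\mathbb{ZP}[X_1,X_2,X'_2].$$
   Context: Notation: $[a,b]=\{a,a+1,\dots,b\}$; $[x]_+=\max(x,0)$, applied entrywise to vectors; $e_1,\dots,e_m$ is the standard basis of $\mathbb Z^m$. Fix integers $m\ge n\ge 1$. A compatible pair $(\Lambda,\widetilde B)$ consists of an $m\times n$ integer matrix $\widetilde B=(b_{kl})$ and a skew-symmetric $m\times m$ integer matrix $\Lambda$ such that $\Lambda\widetilde B=-\begin{bmatrix}D\\0\end{bmatrix}$ for some $D=\mathrm{diag}(\tilde d_1,\dots,\tilde d_n)$ with all $\tilde d_k\in\mathbb Z_{>0}$. Write $\Lambda(a,b)=a^T\Lambda b$. Fix positive integers $d_1,\dots,d_n$ such that $d_k$ divides every entry of the $k$-th column $b^k$ of $\widetilde B$; $\beta^k=\frac1{d_k}b^k$. The quantum torus $\mathcal T(\Lambda)$ is the $\mathbb Z[q^{\pm1/2}]$-algebra with basis $\{X(c)\mid c\in\mathbb Z^m\}$ and multiplication $X(c)X(d)=q^{\frac12\Lambda(c,d)}X(c+d)$; $\mathcal F$ is its skew field of fractions, $X_k=X(e_k)$. For $k\in[1,n]$, $\mathbf h_k=(h_{k,0},\dots,h_{k,d_k})$ with $h_{k,r}\in\mathbb Z[q^{\pm1/2}]$,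 $h_{k,r}=h_{k,d_k-r}$, $h_{k,0}=h_{k,d_k}=1$. A quantum seed $(X,\mathbf h,\Lambda,\widetilde B)$ consists of these data and the map $X:c\mapsto X(c)$. Its mutation in direction $i$ has cluster variables $X'_k=X_k$ for $k\ne i$ and $X'_i=\sum_{r=0}^{d_i}h_{i,r}X(r[\beta^i]_++(d_i-r)[-\beta^i]_+-e_i)$. $\mathbb{ZP}$ is the ring of Laurent polynomials in $X_{n+1},\dots,X_m$ with coefficients in $\mathbb Z[q^{\pm1/2}]$; for $Y_1,\dots,Y_s\in\mathcal F$, $\mathbb{ZP}[Y_1,\dots,Y_s]$ is the subring of $\mathcal F$ generated by $\mathbb{ZP}$ and the $Y_k$ (exponent $\pm1$ means both $Y$ and $Y^{-1}$ are adjoined). *)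

theory Defs
  imports "HOL-Algebra.Generated_Rings"
begin

text \<open>
  Indices run over 1..m.  Integer vectors c in Z^m are functions
  nat => int vanishing outside [1,m].
  We write t = q^(1/2); an element of Z[q^(+-1/2)] is a finitely supported
  function int => int (coefficient of t^j).  An element of the quantum torus
  T(Lambda) is a finitely supported function (int * (nat => int)) => int,
  the value at (j, c) being the coefficient of q^(j/2) X(c).
\<close>

definition zvec :: "nat \<Rightarrow> (nat \<Rightarrow> int) set" where
  "zvec m = {c. \<forall>k. k \<notin> {1..m} \<longrightarrow> c k = 0}"

definition ebasis :: "nat \<Rightarrow> nat \<Rightarrow> int" where
  "ebasis i = (\<lambda>k. if k = i then 1 else 0)"

definition posp :: "(nat \<Rightarrow> int) \<Rightarrow> nat \<Rightarrow> int" where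
  "posp v = (\<lambda>k. max (v k) 0)"

definition bil :: "nat \<Rightarrow> (nat \<Rightarrow> nat \<Rightarrow> int) \<Rightarrow> (nat \<Rightarrow> int) \<Rightarrow> (nat \<Rightarrow> int) \<Rightarrow> int" where
  "bil m L c d = (\<Sum>k\<in>{1..m}. \<Sum>l\<in>{1..m}. c k * L k l * d l)"

definition skew_sym :: "nat \<Rightarrow> (nat \<Rightarrow> nat \<Rightarrow> int) \<Rightarrow> bool" where
  "skew_sym m L \<longleftrightarrow> (\<forall>k\<in>{1..m}. \<forall>l\<in>{1..m}. L k l = - L l k)"

definition compatible_pair ::
  "nat \<Rightarrow> nat \<Rightarrow> (nat \<Rightarrow> nat \<Rightarrow> int) \<Rightarrow> (nat \<Rightarrow> nat \<Rightarrow> int) \<Rightarrow> bool" where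
  "compatible_pair m n L B \<longleftrightarrow> skew_sym m L \<and>
     (\<exists>D :: nat \<Rightarrow> int. (\<forall>k\<in>{1..n}. D k > 0) \<and>
        (\<forall>k\<in>{1..m}. \<forall>l\<in>{1..n}.
           (\<Sum>j\<in>{1..m}. L k j * B j l) = (if k = l then - D k else 0)))"

definition qt_carrier :: "nat \<Rightarrow> ((int \<times> (nat \<Rightarrow> int)) \<Rightarrow> int) set" where
  "qt_carrier m = {f. finite {p. f p \<noteq> 0} \<and> (\<forall>j c. f (j, c) \<noteq> 0 \<longrightarrow> c \<in> zvec m)}"

definition qt_mult :: "nat \<Rightarrow> (nat \<Rightarrow> nat \<Rightarrow> int) \<Rightarrow>
    ((int \<times> (nat \<Rightarrow> int)) \<Rightarrow> int) \<Rightarrow> ((int \<times> (nat \<Rightarrow> int)) \<Rightarrow> int) \<Rightarrow>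
    ((int \<times> (nat \<Rightarrow> int)) \<Rightarrow> int)" where
  "qt_mult m L f g = (\<lambda>(j, c).
     \<Sum>(p, p') \<in> {p. f p \<noteq> 0} \<times> {p. g p \<noteq> 0}.
        if fst p + fst p' + bil m L (snd p) (snd p') = j \<and> (\<lambda>k. snd p k + snd p' k) = c
        then f p * g p' else 0)"

definition quantum_torus :: "nat \<Rightarrow> (nat \<Rightarrow> nat \<Rightarrow> int) \<Rightarrow>
    ((int \<times> (nat \<Rightarrow> int)) \<Rightarrow> int) ring" where
  "quantum_torus m L = \<lparr> carrier = qt_carrier m,
      mult = qt_mult m L,
      one = (\<lambda>(j, c). if j = 0 \<and> c = (\<lambda>_. 0) then 1 else 0),
      zero = (\<lambda>_. 0),
      add = (\<lambda>f g p. f p + g p) \<rparr>"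

definition qX :: "(nat \<Rightarrow> int) \<Rightarrow> ((int \<times> (nat \<Rightarrow> int)) \<Rightarrow> int)" where
  "qX c = (\<lambda>(j, c'). if j = 0 \<and> c' = c then 1 else 0)"

text \<open>The ring ZP: Laurent polynomials in X_{n+1},...,X_m over Z[q^(+-1/2)].\<close>
definition ZP :: "nat \<Rightarrow> nat \<Rightarrow> ((int \<times> (nat \<Rightarrow> int)) \<Rightarrow> int) set" where
  "ZP m n = {f \<in> qt_carrier m. \<forall>j c. f (j, c) \<noteq> 0 \<longrightarrow> (\<forall>k\<in>{1..n}. c k = 0)}"

text \<open>ZP[Y_1,...,Y_s]: subring generated by ZP and the Y's (inside T(Lambda),
  which is a subring of its skew field of fractions).\<close>
definition ZP_adj :: "nat \<Rightarrow> nat \<Rightarrow> (nat \<Rightarrow> nat \<Rightarrow> int) \<Rightarrow>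
    ((int \<times> (nat \<Rightarrow> int)) \<Rightarrow> int) set \<Rightarrow> ((int \<times> (nat \<Rightarrow> int)) \<Rightarrow> int) set" where
  "ZP_adj m n L Ys = generate_ring (quantum_torus m L) (ZP m n \<union> Ys)"

text \<open>Data h: h k r is the element h_{k,r} of Z[q^(+-1/2)].\<close>
definition valid_h :: "nat \<Rightarrow> (nat \<Rightarrow> nat) \<Rightarrow> (nat \<Rightarrow> nat \<Rightarrow> int \<Rightarrow> int) \<Rightarrow> bool" where
  "valid_h n d h \<longleftrightarrow> (\<forall>k\<in>{1..n}.
      (\<forall>r\<in>{0..d k}. finite {j. h k r j \<noteq> 0}) \<and>
      (\<forall>r\<in>{0..d k}. h k r = h k (d k - r)) \<and>
      h k 0 = (\<lambda>j. if j = 0 then 1 else 0) \<and>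
      h k (d k) = (\<lambda>j. if j = 0 then 1 else 0))"

text \<open>Quantum seed (X, h, Lambda, B) with n exchangeable indices (X is the
  standard map c |-> X(c) of T(Lambda)); d_k divides column k of B.\<close>
definition quantum_seed ::
  "nat \<Rightarrow> nat \<Rightarrow> (nat \<Rightarrow> nat \<Rightarrow> int) \<Rightarrow> (nat \<Rightarrow> nat \<Rightarrow> int) \<Rightarrow>
   (nat \<Rightarrow> nat) \<Rightarrow> (nat \<Rightarrow> nat \<Rightarrow> int \<Rightarrow> int) \<Rightarrow> bool" where
  "quantum_seed m n L B d h \<longleftrightarrow> 1 \<le> n \<and> n \<le> m \<and> compatible_pair m n L B \<and>
     (\<forall>k\<in>{1..n}. d k > 0 \<and> (\<forall>j\<in>{1..m}. int (d k) dvd B j k)) \<and>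
     valid_h n d h"

definition beta :: "nat \<Rightarrow> (nat \<Rightarrow> nat \<Rightarrow> int) \<Rightarrow> (nat \<Rightarrow> nat) \<Rightarrow> nat \<Rightarrow> nat \<Rightarrow> int" where
  "beta m B d i = (\<lambda>k. if k \<in> {1..m} then B k i div int (d i) else 0)"

text \<open>The new cluster variable X'_i of the mutation mu_i:
  sum_{r=0}^{d_i} h_{i,r} X(r[beta^i]_+ + (d_i - r)[-beta^i]_+ - e_i).\<close>
definition mut_var :: "nat \<Rightarrow> (nat \<Rightarrow> nat \<Rightarrow> int) \<Rightarrow> (nat \<Rightarrow> nat) \<Rightarrow>
    (nat \<Rightarrow> nat \<Rightarrow> int \<Rightarrow> int) \<Rightarrow> nat \<Rightarrow> ((int \<times> (nat \<Rightarrow> int)) \<Rightarrow> int)" where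
  "mut_var m B d h i = (\<lambda>(j, c). \<Sum>r\<in>{0..d i}.
      if c = (\<lambda>k. int r * posp (beta m B d i) k
                 + int (d i - r) * posp (\<lambda>l. - beta m B d i l) k - ebasis i k)
      then h i r j else 0)"

end

theory Submission
  imports Defs "HOL-Library.Function_Algebras"
begin


definition supp :: "((int \<times> (nat \<Rightarrow> int)) \<Rightarrow> int) \<Rightarrow> (int \<times> (nat \<Rightarrow> int)) set" where
  "supp f = {p. f p \<noteq> 0}"

definition star :: "nat \<Rightarrow> (nat \<Rightarrow> nat \<Rightarrow> int) \<Rightarrow> (int \<times> (nat \<Rightarrow> int)) \<Rightarrow> (int \<times> (nat \<Rightarrow> int)) \<Rightarrow> (int \<times> (nat \<Rightarrow> int))" where
  "star m L p q = (fst p + fst q + bil m L (snd p) (snd q), snd p + snd q)"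

lemma bil_add_left: "bil m L (a + b) c = bil m L a c + bil m L b c"
  by (simp add: bil_def distrib_right sum.distrib)
lemma bil_add_right: "bil m L a (b + c) = bil m L a b + bil m L a c"
  by (simp add: bil_def distrib_left sum.distrib)
lemma bil_zero_left[simp]: "bil m L 0 c = 0"
  by (simp add: bil_def)
lemma bil_zero_right[simp]: "bil m L c 0 = 0"
  by (simp add: bil_def)
lemma bil_uminus_left: "bil m L (- a) c = - bil m L a c"
  by (simp add: bil_def sum_negf)
lemma bil_uminus_right: "bil m L a (- c) = - bil m L a c"
  by (simp add: bil_def sum_negf)
lemma bil_diff_left: "bil m L (a - b) c = bil m L a c - bil m L b c"
  using bil_add_left[of m L a "-b" c] bil_uminus_left[of m L b c] by simp
lemma bil_diff_right: "bil m L a (b - c) = bil m L a b - bil m L a c"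
  using bil_add_right[of m L a b "-c"] bil_uminus_right[of m L a c] by simp

lemma star_assoc: "star m L (star m L p q) r = star m L p (star m L q r)"
  by (simp add: star_def bil_add_left bil_add_right algebra_simps)

lemma qt_mult_conv:
  assumes "finite A" "finite B" "supp f \<subseteq> A" "supp g \<subseteq> B"
  shows "qt_mult m L f g x = (\<Sum>p\<in>A. \<Sum>q\<in>B. if star m L p q = x then f p * g q else 0)"
proof -
  obtain j c where x: "x = (j, c)" by fastforce
  have fin: "finite (supp f \<times> supp g)" using assms finite_subset by (meson finite_SigmaI)
  have e: "\<And>p q. (fst p + fst q + bil m L (snd p) (snd q) = j \<and> (\<lambda>k. snd p k + snd q k) = c)
      = (star m L p q = x)"
    by (auto simp: star_def x plus_fun_def)
  have "qt_mult m L f g x = (\<Sum>(p, q)\<in>supp f \<times> supp g. if star m L p q = x then f p * g q else 0)"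
    unfolding qt_mult_def x supp_def split_def
    apply (simp only: prod.case fst_conv snd_conv)
    apply (rule sum.cong[OF refl])
    using e[unfolded x] by (simp only:)
  also have "\<dots> = (\<Sum>(p, q)\<in>A \<times> B. if star m L p q = x then f p * g q else 0)"
    apply (rule sum.mono_neutral_left)
    using assms by (auto simp: supp_def split: if_splits)
  also have "\<dots> = (\<Sum>p\<in>A. \<Sum>q\<in>B. if star m L p q = x then f p * g q else 0)"
    by (rule sum.cartesian_product[symmetric])
  finally show ?thesis .
qed

lemma carrier_finite: "f \<in> qt_carrier m \<Longrightarrow> finite (supp f)"
  by (simp add: qt_carrier_def supp_def)

lemma qt_mult_supp:
  assumes "f \<in> qt_carrier m" "g \<in> qt_carrier m" "qt_mult m L f g x \<noteq> 0"
  shows "\<exists>p q. f p \<noteq> 0 \<and> g q \<noteq> 0 \<and> star m L p q = x"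
proof -
  have "(\<Sum>p\<in>supp f. \<Sum>q\<in>supp g. if star m L p q = x then f p * g q else 0) \<noteq> 0"
    using assms(3) qt_mult_conv[of "supp f" "supp g" f g m L x] carrier_finite[OF assms(1)] carrier_finite[OF assms(2)] by simp
  then obtain p where p: "p \<in> supp f" "(\<Sum>q\<in>supp g. if star m L p q = x then f p * g q else 0) \<noteq> 0"
    by (rule sum.not_neutral_contains_not_neutral)
  obtain q where "q \<in> supp g" "(if star m L p q = x then f p * g q else 0) \<noteq> 0"
    using p(2) by (rule sum.not_neutral_contains_not_neutral)
  then show ?thesis using p(1) unfolding supp_def
    by (intro exI[of _ p] exI[of _ q]) (auto split: if_splits)
qed

lemma zvec_add: "a \<in> zvec m \<Longrightarrow> b \<in> zvec m \<Longrightarrow> a + b \<in> zvec m"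
  by (simp add: zvec_def)

lemma qt_mult_closed:
  assumes "f \<in> qt_carrier m" "g \<in> qt_carrier m"
  shows "qt_mult m L f g \<in> qt_carrier m"
proof -
  let ?S = "(\<lambda>(p, q). star m L p q) ` (supp f \<times> supp g)"
  have "supp (qt_mult m L f g) \<subseteq> ?S"
  proof
    fix x assume "x \<in> supp (qt_mult m L f g)"
    then have "qt_mult m L f g x \<noteq> 0" by (simp add: supp_def)
    then obtain p q where "f p \<noteq> 0" "g q \<noteq> 0" "star m L p q = x"
      using qt_mult_supp[OF assms, of L x] by blast
    then show "x \<in> ?S" by (force simp: supp_def)
  qed
  moreover have "finite ?S" using carrier_finite assms by auto
  ultimately have fin: "finite (supp (qt_mult m L f g))" using finite_subset by blast
  have "\<forall>j c. qt_mult m L f g (j, c) \<noteq> 0 \<longrightarrow> c \<in> zvec m"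
  proof (intro allI impI)
    fix j c assume "qt_mult m L f g (j, c) \<noteq> 0"
    then obtain p q where "f p \<noteq> 0" "g q \<noteq> 0" "star m L p q = (j, c)"
      using qt_mult_supp[OF assms] by blast
    moreover have "snd p \<in> zvec m" "snd q \<in> zvec m"
      using assms \<open>f p \<noteq> 0\<close> \<open>g q \<noteq> 0\<close> unfolding qt_carrier_def
      by (metis (mono_tags, lifting) mem_Collect_eq prod.collapse)+
    ultimately show "c \<in> zvec m" by (auto simp: star_def zvec_add)
  qed
  then show ?thesis using fin by (simp add: qt_carrier_def supp_def)
qed


lemma supp_mult_sub:
  assumes "f \<in> qt_carrier m" "g \<in> qt_carrier m"
  shows "supp (qt_mult m L f g) \<subseteq> (\<lambda>(p, q). star m L p q) ` (supp f \<times> supp g)"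
proof
  fix x assume "x \<in> supp (qt_mult m L f g)"
  then have "qt_mult m L f g x \<noteq> 0" by (simp add: supp_def)
  then obtain p q where "f p \<noteq> 0" "g q \<noteq> 0" "star m L p q = x"
    using qt_mult_supp[OF assms, of L x] by blast
  then show "x \<in> (\<lambda>(p, q). star m L p q) ` (supp f \<times> supp g)" by (force simp: supp_def)
qed

lemma sum4_swap:
  "(\<Sum>s\<in>S. \<Sum>r\<in>R. \<Sum>p\<in>P. \<Sum>q\<in>Q. F s r p q) = (\<Sum>p\<in>P. \<Sum>q\<in>Q. \<Sum>r\<in>R. \<Sum>s\<in>S. F s r p q)"
proof -
  have "(\<Sum>s\<in>S. \<Sum>r\<in>R. \<Sum>p\<in>P. \<Sum>q\<in>Q. F s r p q) = (\<Sum>s\<in>S. \<Sum>p\<in>P. \<Sum>q\<in>Q. \<Sum>r\<in>R. F s r p q)"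
  proof (rule sum.cong[OF refl])
    fix s
    have "(\<Sum>r\<in>R. \<Sum>p\<in>P. \<Sum>q\<in>Q. F s r p q) = (\<Sum>p\<in>P. \<Sum>r\<in>R. \<Sum>q\<in>Q. F s r p q)"
      by (rule sum.swap)
    also have "\<dots> = (\<Sum>p\<in>P. \<Sum>q\<in>Q. \<Sum>r\<in>R. F s r p q)"
      by (rule sum.cong[OF refl], rule sum.swap)
    finally show "(\<Sum>r\<in>R. \<Sum>p\<in>P. \<Sum>q\<in>Q. F s r p q) = (\<Sum>p\<in>P. \<Sum>q\<in>Q. \<Sum>r\<in>R. F s r p q)" .
  qed
  also have "\<dots> = (\<Sum>p\<in>P. \<Sum>s\<in>S. \<Sum>q\<in>Q. \<Sum>r\<in>R. F s r p q)"
    by (rule sum.swap)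
  also have "\<dots> = (\<Sum>p\<in>P. \<Sum>q\<in>Q. \<Sum>s\<in>S. \<Sum>r\<in>R. F s r p q)"
    by (rule sum.cong[OF refl], rule sum.swap)
  also have "\<dots> = (\<Sum>p\<in>P. \<Sum>q\<in>Q. \<Sum>r\<in>R. \<Sum>s\<in>S. F s r p q)"
    by (rule sum.cong[OF refl], rule sum.cong[OF refl], rule sum.swap)
  finally show ?thesis .
qed

lemma sum_if_eq_collapse:
  assumes "finite S" "a \<in> S"
  shows "(\<Sum>s\<in>S. if a = s \<and> P s then G s else (0::int)) = (if P a then G a else 0)"
proof -
  have "(\<Sum>s\<in>S. if a = s \<and> P s then G s else (0::int)) = (\<Sum>s\<in>S. if s = a then (if P s then G s else 0) else 0)"
    by (rule sum.cong) auto
  also have "\<dots> = (if P a then G a else 0)" using assms by (simp add: sum.delta)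
  finally show ?thesis .
qed

lemma if_sum0: "(if P then sum f S else (0::int)) = sum (\<lambda>x. if P then f x else 0) S"
  by simp

lemma if_if0: "(if P then (if Q then a else 0) else (0::int)) = (if P \<and> Q then a else 0)"
  by simp

lemma qt_assoc:
  assumes f: "f \<in> qt_carrier m" and g: "g \<in> qt_carrier m" and h: "h \<in> qt_carrier m"
  shows "qt_mult m L (qt_mult m L f g) h = qt_mult m L f (qt_mult m L g h)"
proof
  fix x
  define A where "A = supp f"
  define B where "B = supp g"
  define C where "C = supp h"
  define AB where "AB = (\<lambda>(p, q). star m L p q) ` (A \<times> B)"
  define BC where "BC = (\<lambda>(p, q). star m L p q) ` (B \<times> C)"
  have fA: "finite A" "finite B" "finite C" using carrier_finite f g h by (auto simp: A_def B_def C_def)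
  then have fAB: "finite AB" "finite BC" by (auto simp: AB_def BC_def)
  have sAB: "supp (qt_mult m L f g) \<subseteq> AB" unfolding AB_def A_def B_def by (rule supp_mult_sub[OF f g])
  have sBC: "supp (qt_mult m L g h) \<subseteq> BC" unfolding BC_def B_def C_def by (rule supp_mult_sub[OF g h])
  have inAB: "\<And>p q. p \<in> A \<Longrightarrow> q \<in> B \<Longrightarrow> star m L p q \<in> AB" unfolding AB_def by force
  have inBC: "\<And>p q. p \<in> B \<Longrightarrow> q \<in> C \<Longrightarrow> star m L p q \<in> BC" unfolding BC_def by force
  have fg: "\<And>s. qt_mult m L f g s = (\<Sum>p\<in>A. \<Sum>q\<in>B. if star m L p q = s then f p * g q else 0)"
    by (rule qt_mult_conv) (use fA in \<open>auto simp: A_def B_def\<close>)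
  have gh: "\<And>t. qt_mult m L g h t = (\<Sum>q\<in>B. \<Sum>r\<in>C. if star m L q r = t then g q * h r else 0)"
    by (rule qt_mult_conv) (use fA in \<open>auto simp: B_def C_def\<close>)
  have "qt_mult m L (qt_mult m L f g) h x
      = (\<Sum>s\<in>AB. \<Sum>r\<in>C. if star m L s r = x then qt_mult m L f g s * h r else 0)"
    by (rule qt_mult_conv) (use fA fAB sAB in \<open>auto simp: C_def\<close>)
  also have "\<dots> = (\<Sum>s\<in>AB. \<Sum>r\<in>C. \<Sum>p\<in>A. \<Sum>q\<in>B.
        if star m L p q = s \<and> star m L s r = x then f p * g q * h r else 0)"
    unfolding fg by (simp only: sum_distrib_right if_sum0) (intro sum.cong refl; simp)
  also have "\<dots> = (\<Sum>p\<in>A. \<Sum>q\<in>B. \<Sum>r\<in>C. \<Sum>s\<in>AB.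
        if star m L p q = s \<and> star m L s r = x then f p * g q * h r else 0)"
    by (rule sum4_swap)
  also have "\<dots> = (\<Sum>p\<in>A. \<Sum>q\<in>B. \<Sum>r\<in>C.
        if star m L (star m L p q) r = x then f p * g q * h r else 0)"
    by (intro sum.cong refl, rule sum_if_eq_collapse[OF fAB(1) inAB]) auto
  finally have L1: "qt_mult m L (qt_mult m L f g) h x = \<dots>" .
  have "qt_mult m L f (qt_mult m L g h) x
      = (\<Sum>p\<in>A. \<Sum>t\<in>BC. if star m L p t = x then f p * qt_mult m L g h t else 0)"
    by (rule qt_mult_conv) (use fA fAB sBC in \<open>auto simp: A_def\<close>)
  also have "\<dots> = (\<Sum>p\<in>A. \<Sum>t\<in>BC. \<Sum>q\<in>B. \<Sum>r\<in>C.
        if star m L q r = t \<and> star m L p t = x then f p * g q * h r else 0)"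
    unfolding gh by (simp only: sum_distrib_left if_sum0) (intro sum.cong refl; simp)
  also have "\<dots> = (\<Sum>p\<in>A. \<Sum>q\<in>B. \<Sum>r\<in>C. \<Sum>t\<in>BC.
        if star m L q r = t \<and> star m L p t = x then f p * g q * h r else 0)"
  proof (rule sum.cong[OF refl])
    fix p
    show "(\<Sum>t\<in>BC. \<Sum>q\<in>B. \<Sum>r\<in>C. if star m L q r = t \<and> star m L p t = x then f p * g q * h r else 0)
      = (\<Sum>q\<in>B. \<Sum>r\<in>C. \<Sum>t\<in>BC. if star m L q r = t \<and> star m L p t = x then f p * g q * h r else 0)"
      by (rule trans[OF sum.swap], rule sum.cong[OF refl], rule sum.swap)
  qed
  also have "\<dots> = (\<Sum>p\<in>A. \<Sum>q\<in>B. \<Sum>r\<in>C.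
        if star m L p (star m L q r) = x then f p * g q * h r else 0)"
    by (intro sum.cong refl, rule sum_if_eq_collapse[OF fAB(2) inBC]) auto
  finally show "qt_mult m L (qt_mult m L f g) h x = qt_mult m L f (qt_mult m L g h) x"
    using L1 by (simp add: star_assoc)
qed


definition qone :: "(int \<times> (nat \<Rightarrow> int)) \<Rightarrow> int" where
  "qone = (\<lambda>(j, c). if j = 0 \<and> c = (\<lambda>_. 0) then 1 else 0)"

lemma supp_qone: "supp qone = {(0, 0)}"
  by (auto simp: supp_def qone_def zero_fun_def split: if_splits)

lemma qone_00[simp]: "qone (0, 0) = 1"
  by (simp add: qone_def zero_fun_def)

lemma star_zero_left[simp]: "star m L (0, 0) q = q"
  by (simp add: star_def)
lemma star_zero_right[simp]: "star m L q (0, 0) = q"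
  by (simp add: star_def)

lemma qone_carrier: "qone \<in> qt_carrier m"
proof -
  have "finite {p. qone p \<noteq> 0}" using supp_qone by (simp add: supp_def)
  moreover have "\<forall>j c. qone (j, c) \<noteq> 0 \<longrightarrow> c \<in> zvec m"
    by (auto simp: qone_def zvec_def split: if_splits)
  ultimately show ?thesis by (simp add: qt_carrier_def)
qed

lemma qt_l_one: assumes "f \<in> qt_carrier m" shows "qt_mult m L qone f = f"
proof
  fix x
  have "qt_mult m L qone f x = (\<Sum>p\<in>{(0, 0)}. \<Sum>q\<in>supp f. if star m L p q = x then qone p * f q else 0)"
    by (rule qt_mult_conv) (auto simp: supp_qone carrier_finite[OF assms])
  also have "\<dots> = (\<Sum>q\<in>supp f. if q = x then f q else 0)"
    by (simp add: zero_fun_def[symmetric] cong: if_cong)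
  also have "\<dots> = f x" using carrier_finite[OF assms] by (simp add: sum.delta' supp_def)
  finally show "qt_mult m L qone f x = f x" .
qed

lemma qt_r_one: assumes "f \<in> qt_carrier m" shows "qt_mult m L f qone = f"
proof
  fix x
  have "qt_mult m L f qone x = (\<Sum>q\<in>supp f. \<Sum>p\<in>{(0, 0)}. if star m L q p = x then f q * qone p else 0)"
    by (rule qt_mult_conv) (auto simp: supp_qone carrier_finite[OF assms])
  also have "\<dots> = (\<Sum>q\<in>supp f. if q = x then f q else 0)"
    by (simp add: zero_fun_def[symmetric] cong: if_cong)
  also have "\<dots> = f x" using carrier_finite[OF assms] by (simp add: sum.delta' supp_def)
  finally show "qt_mult m L f qone x = f x" .
qed

lemma supp_add_sub: "supp (\<lambda>p. f p + g p) \<subseteq> supp f \<union> supp g"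
  by (auto simp: supp_def)

lemma add_carrier: "f \<in> qt_carrier m \<Longrightarrow> g \<in> qt_carrier m \<Longrightarrow> (\<lambda>p. f p + g p) \<in> qt_carrier m"
proof -
  assume a: "f \<in> qt_carrier m" "g \<in> qt_carrier m"
  have "finite (supp (\<lambda>p. f p + g p))"
    using supp_add_sub[of f g] carrier_finite[OF a(1)] carrier_finite[OF a(2)] finite_subset by blast
  moreover have "\<forall>j c. f (j, c) + g (j, c) \<noteq> 0 \<longrightarrow> c \<in> zvec m"
  proof (intro allI impI)
    fix j c assume "f (j, c) + g (j, c) \<noteq> 0"
    then have "f (j, c) \<noteq> 0 \<or> g (j, c) \<noteq> 0" by auto
    then show "c \<in> zvec m" using a by (auto simp: qt_carrier_def)
  qed
  ultimately show ?thesis by (simp add: qt_carrier_def supp_def)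
qed

lemma neg_carrier: "f \<in> qt_carrier m \<Longrightarrow> (\<lambda>p. - f p) \<in> qt_carrier m"
  by (simp add: qt_carrier_def)

lemma qt_distr_l:
  assumes f: "f \<in> qt_carrier m" and g: "g \<in> qt_carrier m" and h: "h \<in> qt_carrier m"
  shows "qt_mult m L (\<lambda>p. f p + g p) h = (\<lambda>p. qt_mult m L f h p + qt_mult m L g h p)"
proof
  fix x
  define A where "A = supp f \<union> supp g"
  have fA: "finite A" "finite (supp h)" using carrier_finite f g h by (auto simp: A_def)
  have "qt_mult m L (\<lambda>p. f p + g p) h x = (\<Sum>p\<in>A. \<Sum>q\<in>supp h. if star m L p q = x then (f p + g p) * h q else 0)"
    by (rule qt_mult_conv) (use fA supp_add_sub[of f g] in \<open>auto simp: A_def\<close>)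
  also have "\<dots> = (\<Sum>p\<in>A. \<Sum>q\<in>supp h. if star m L p q = x then f p * h q else 0)
      + (\<Sum>p\<in>A. \<Sum>q\<in>supp h. if star m L p q = x then g p * h q else 0)"
    by (simp add: sum.distrib[symmetric] distrib_right if_distrib cong: if_cong)
  also have "\<dots> = qt_mult m L f h x + qt_mult m L g h x"
    by (subst (1 2) qt_mult_conv[where A=A and B="supp h"]) (use fA in \<open>auto simp: A_def\<close>)
  finally show "qt_mult m L (\<lambda>p. f p + g p) h x = qt_mult m L f h x + qt_mult m L g h x" .
qed

lemma qt_distr_r:
  assumes f: "f \<in> qt_carrier m" and g: "g \<in> qt_carrier m" and h: "h \<in> qt_carrier m"
  shows "qt_mult m L h (\<lambda>p. f p + g p) = (\<lambda>p. qt_mult m L h f p + qt_mult m L h g p)"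
proof
  fix x
  define A where "A = supp f \<union> supp g"
  have fA: "finite A" "finite (supp h)" using carrier_finite f g h by (auto simp: A_def)
  have "qt_mult m L h (\<lambda>p. f p + g p) x = (\<Sum>q\<in>supp h. \<Sum>p\<in>A. if star m L q p = x then h q * (f p + g p) else 0)"
    by (rule qt_mult_conv) (use fA supp_add_sub[of f g] in \<open>auto simp: A_def\<close>)
  also have "\<dots> = (\<Sum>q\<in>supp h. \<Sum>p\<in>A. if star m L q p = x then h q * f p else 0)
      + (\<Sum>q\<in>supp h. \<Sum>p\<in>A. if star m L q p = x then h q * g p else 0)"
    by (simp add: sum.distrib[symmetric] distrib_left if_distrib cong: if_cong)
  also have "\<dots> = qt_mult m L h f x + qt_mult m L h g x"
    by (subst (1 2) qt_mult_conv[where B=A and A="supp h"]) (use fA in \<open>auto simp: A_def\<close>)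
  finally show "qt_mult m L h (\<lambda>p. f p + g p) x = qt_mult m L h f x + qt_mult m L h g x" .
qed

lemma zero_carrier_lem: "(\<lambda>_. 0) \<in> qt_carrier m"
  by (simp add: qt_carrier_def)

lemma qt_ring: "ring (quantum_torus m L)"
proof (rule ringI)
  show "abelian_group (quantum_torus m L)"
  proof (rule abelian_groupI)
    fix x assume "x \<in> carrier (quantum_torus m L)"
    then show "\<exists>y\<in>carrier (quantum_torus m L). y \<oplus>\<^bsub>quantum_torus m L\<^esub> x = \<zero>\<^bsub>quantum_torus m L\<^esub>"
      by (intro bexI[of _ "\<lambda>p. - x p"]) (auto simp: quantum_torus_def neg_carrier)
  qed (auto simp: quantum_torus_def add_carrier add.assoc add.commute zero_carrier_lem)
  show "monoid (quantum_torus m L)"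
    by (rule monoidI)
      (auto simp: quantum_torus_def qt_mult_closed qt_assoc qone_carrier[unfolded qone_def]
        qt_l_one[unfolded qone_def] qt_r_one[unfolded qone_def])
qed (auto simp: quantum_torus_def qt_distr_l qt_distr_r)


lemma qt_simps[simp]:
  "carrier (quantum_torus m L) = qt_carrier m"
  "mult (quantum_torus m L) = qt_mult m L"
  "one (quantum_torus m L) = qone"
  "zero (quantum_torus m L) = (\<lambda>_. 0)"
  "add (quantum_torus m L) = (\<lambda>f g p. f p + g p)"
  by (simp_all add: quantum_torus_def qone_def)

lemma qt_a_inv: "f \<in> qt_carrier m \<Longrightarrow> a_inv (quantum_torus m L) f = (\<lambda>p. - f p)"
proof -
  assume f: "f \<in> qt_carrier m"
  interpret ring "quantum_torus m L" by (rule qt_ring)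
  show ?thesis
    by (rule minus_equality) (auto simp: f neg_carrier)
qed

definition sm :: "int \<Rightarrow> (nat \<Rightarrow> int) \<Rightarrow> (int \<times> (nat \<Rightarrow> int)) \<Rightarrow> int" where
  "sm j c = (\<lambda>(j', c'). if j' = j \<and> c' = c then 1 else 0)"

lemma qX_sm: "qX c = sm 0 c"
  by (simp add: qX_def sm_def)

lemma qone_sm: "qone = sm 0 0"
  by (simp add: qone_def sm_def zero_fun_def)

lemma supp_sm: "supp (sm j c) = {(j, c)}"
  by (auto simp: supp_def sm_def split: if_splits)

lemma sm_carrier: "c \<in> zvec m \<Longrightarrow> sm j c \<in> qt_carrier m"
proof -
  assume c: "c \<in> zvec m"
  have "finite {p. sm j c p \<noteq> 0}" using supp_sm[of j c] by (simp add: supp_def)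
  moreover have "\<forall>j' c'. sm j c (j', c') \<noteq> 0 \<longrightarrow> c' \<in> zvec m"
    using c by (auto simp: sm_def split: if_splits)
  ultimately show ?thesis by (simp add: qt_carrier_def)
qed

lemma mult_sm_right:
  assumes f: "f \<in> qt_carrier m"
  shows "qt_mult m L f (sm j0 w) = (\<lambda>(j, c). f (j - j0 - bil m L (c - w) w, c - w))"
proof
  fix x :: "int \<times> (nat \<Rightarrow> int)"
  obtain j c where x: "x = (j, c)" by fastforce
  define p0 where "p0 = (j - j0 - bil m L (c - w) w, c - w)"
  have eq: "\<And>p. (star m L p (j0, w) = x) = (p = p0)"
    by (auto simp: star_def x p0_def)
  have "qt_mult m L f (sm j0 w) x = (\<Sum>p\<in>supp f. \<Sum>q\<in>{(j0, w)}. if star m L p q = x then f p * sm j0 w q else 0)"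
    by (rule qt_mult_conv) (auto simp: supp_sm carrier_finite[OF f])
  also have "\<dots> = (\<Sum>p\<in>supp f. if p = p0 then f p else 0)"
    by (simp add: eq sm_def cong: if_cong)
  also have "\<dots> = f p0" using carrier_finite[OF f] by (simp add: sum.delta' supp_def)
  finally show "qt_mult m L f (sm j0 w) x = (\<lambda>(j, c). f (j - j0 - bil m L (c - w) w, c - w)) x"
    by (simp add: x p0_def)
qed

lemma mult_sm_left:
  assumes f: "f \<in> qt_carrier m"
  shows "qt_mult m L (sm j0 w) f = (\<lambda>(j, c). f (j - j0 - bil m L w (c - w), c - w))"
proof
  fix x :: "int \<times> (nat \<Rightarrow> int)"
  obtain j c where x: "x = (j, c)" by fastforce
  define p0 where "p0 = (j - j0 - bil m L w (c - w), c - w)"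
  have eq: "\<And>p. (star m L (j0, w) p = x) = (p = p0)"
    by (auto simp: star_def x p0_def)
  have "qt_mult m L (sm j0 w) f x = (\<Sum>q\<in>{(j0, w)}. \<Sum>p\<in>supp f. if star m L q p = x then sm j0 w q * f p else 0)"
    by (rule qt_mult_conv) (auto simp: supp_sm carrier_finite[OF f])
  also have "\<dots> = (\<Sum>p\<in>supp f. if p = p0 then f p else 0)"
    by (simp add: eq sm_def cong: if_cong)
  also have "\<dots> = f p0" using carrier_finite[OF f] by (simp add: sum.delta' supp_def)
  finally show "qt_mult m L (sm j0 w) f x = (\<lambda>(j, c). f (j - j0 - bil m L w (c - w), c - w)) x"
    by (simp add: x p0_def)
qed

lemma sm_mult: "c \<in> zvec m \<Longrightarrow> c' \<in> zvec m \<Longrightarrow>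
   qt_mult m L (sm j c) (sm j' c') = sm (j + j' + bil m L c c') (c + c')"
proof -
  assume c: "c \<in> zvec m" "c' \<in> zvec m"
  have "qt_mult m L (sm j c) (sm j' c') = (\<lambda>(i, e). sm j c (i - j' - bil m L (e - c') c', e - c'))"
    by (rule mult_sm_right[OF sm_carrier[OF c(1)]])
  also have "\<dots> = sm (j + j' + bil m L c c') (c + c')"
  proof (rule ext, clarify)
    fix i e
    show "sm j c (i - j' - bil m L (e - c') c', e - c') = sm (j + j' + bil m L c c') (c + c') (i, e)"
    proof (cases "e = c + c'")
      case True then show ?thesis by (auto simp: sm_def)
    next
      case False
      then have "e - c' \<noteq> c" by auto
      then show ?thesis using False by (auto simp: sm_def)
    qed
  qed
  finally show ?thesis .
qed


lemma bil_scale_right: "bil m L a (\<lambda>k. i * c k) = i * bil m L a c"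
  by (simp add: bil_def sum_distrib_left algebra_simps)
lemma bil_scale_left: "bil m L (\<lambda>k. i * c k) a = i * bil m L c a"
  by (simp add: bil_def sum_distrib_left algebra_simps)

definition mon12 :: "int \<Rightarrow> int \<Rightarrow> nat \<Rightarrow> int" where
  "mon12 a b = (\<lambda>k. if k = 1 then a else if k = 2 then b else 0)"

lemma mon12_zvec: "2 \<le> m \<Longrightarrow> mon12 a b \<in> zvec m"
  by (simp add: mon12_def zvec_def)

lemma ZP_carrier: "ZP m n \<subseteq> qt_carrier m"
  by (auto simp: ZP_def)

definition res12 :: "int \<Rightarrow> int \<Rightarrow> ((int \<times> (nat \<Rightarrow> int)) \<Rightarrow> int) \<Rightarrow> ((int \<times> (nat \<Rightarrow> int)) \<Rightarrow> int)" where
  "res12 a b f = (\<lambda>(j, c). if c 1 = a \<and> c 2 = b then f (j, c) else 0)"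

lemma res12_carrier: "f \<in> qt_carrier m \<Longrightarrow> res12 a b f \<in> qt_carrier m"
proof -
  assume f: "f \<in> qt_carrier m"
  have "supp (res12 a b f) \<subseteq> supp f" by (auto simp: supp_def res12_def split: if_splits)
  then have "finite (supp (res12 a b f))" using carrier_finite[OF f] finite_subset by blast
  then show ?thesis using f by (auto simp: qt_carrier_def supp_def res12_def split: if_splits)
qed

lemma res12_in_gen:
  assumes m2: "2 \<le> m" and H: "ZP m 2 \<subseteq> H" and f: "f \<in> qt_carrier m"
    and mon: "sm j0 (mon12 a b) \<in> generate_ring (quantum_torus m L) H"
  shows "res12 a b f \<in> generate_ring (quantum_torus m L) H"
proof -
  define w where "w = mon12 a b"
  define r where "r = res12 a b f"
  define g where "g = (\<lambda>(j, c). r (j + j0 + bil m L c w, c + w))"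
  have wz: "w \<in> zvec m" using mon12_zvec[OF m2] by (simp add: w_def)
  have r: "r \<in> qt_carrier m" using res12_carrier[OF f] by (simp add: r_def)
  have "supp g \<subseteq> (\<lambda>(j, c). (j - j0 - bil m L (c - w) w, c - w)) ` supp r"
  proof
    fix p assume p: "p \<in> supp g"
    obtain j c where pj: "p = (j, c)" by fastforce
    have "(j + j0 + bil m L c w, c + w) \<in> supp r" using p by (simp add: pj supp_def g_def)
    moreover have "p = (\<lambda>(j, c). (j - j0 - bil m L (c - w) w, c - w)) (j + j0 + bil m L c w, c + w)"
      by (simp add: pj)
    ultimately show "p \<in> (\<lambda>(j, c). (j - j0 - bil m L (c - w) w, c - w)) ` supp r" by blast
  qed
  then have fin: "finite (supp g)" using carrier_finite[OF r] finite_subset by blast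
  have gZ: "g \<in> ZP m 2"
  proof -
    have "\<forall>j c. g (j, c) \<noteq> 0 \<longrightarrow> c \<in> zvec m \<and> (\<forall>k\<in>{1..2}. c k = 0)"
    proof (intro allI impI)
      fix j c assume "g (j, c) \<noteq> 0"
      then have nz: "r (j + j0 + bil m L c w, c + w) \<noteq> 0" by (simp add: g_def)
      then have "c + w \<in> zvec m" using r by (auto simp: qt_carrier_def)
      then have "c \<in> zvec m" using wz by (auto simp: zvec_def)
      moreover have "(c + w) 1 = a" "(c + w) 2 = b" using nz by (auto simp: r_def res12_def split: if_splits)
      then have "c 1 = 0" "c 2 = 0" by (auto simp: w_def mon12_def)
      moreover have "\<forall>k\<in>{1..2::nat}. c k = 0"
      proof
        fix k :: nat assume "k \<in> {1..2}"
        then have "k = 1 \<or> k = 2" by auto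
        then show "c k = 0" using \<open>c 1 = 0\<close> \<open>c 2 = 0\<close> by auto
      qed
      ultimately show "c \<in> zvec m \<and> (\<forall>k\<in>{1..2}. c k = 0)"
        by blast
    qed
    then show ?thesis using fin by (auto simp: ZP_def qt_carrier_def supp_def)
  qed
  have gc: "g \<in> qt_carrier m" using gZ by (simp add: ZP_def)
  have "qt_mult m L g (sm j0 w) = r"
  proof (rule ext, clarify)
    fix j c
    have "qt_mult m L g (sm j0 w) (j, c) = g (j - j0 - bil m L (c - w) w, c - w)"
      by (simp add: mult_sm_right[OF gc])
    also have "\<dots> = r (j, c)" by (simp add: g_def)
    finally show "qt_mult m L g (sm j0 w) (j, c) = r (j, c)" .
  qed
  moreover have "g \<in> generate_ring (quantum_torus m L) H" using gZ H by (auto intro: generate_ring.incl)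
  ultimately have "r \<in> generate_ring (quantum_torus m L) H"
    using generate_ring.eng_mult[OF _ mon[folded w_def]] by fastforce
  then show ?thesis by (simp add: r_def)
qed

lemma gen_decomp_aux:
  assumes m2: "2 \<le> m" and H: "ZP m 2 \<subseteq> H" and Hc: "H \<subseteq> qt_carrier m" and S: "finite S"
  shows "\<forall>f. f \<in> qt_carrier m \<longrightarrow> (\<lambda>(j, c). (c 1, c 2)) ` supp f \<subseteq> S \<longrightarrow>
     (\<forall>(a, b)\<in>S. \<exists>j0. sm j0 (mon12 a b) \<in> generate_ring (quantum_torus m L) H) \<longrightarrow>
     f \<in> generate_ring (quantum_torus m L) H"
  using S
proof (induction S rule: finite_induct)
  case empty
  interpret ring "quantum_torus m L" by (rule qt_ring)
  show ?case
  proof (intro allI impI)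
    fix f assume "f \<in> qt_carrier m" "(\<lambda>(j, c). (c 1, c 2)) ` supp f \<subseteq> {}"
    then have "f = (\<lambda>_. 0)" by (auto simp: supp_def)
    then show "f \<in> generate_ring (quantum_torus m L) H" using zero_in_generate by simp
  qed
next
  case (insert ab S)
  obtain a b where ab: "ab = (a, b)" by fastforce
  show ?case
  proof (intro allI impI)
    fix f assume f: "f \<in> qt_carrier m" and sf: "(\<lambda>(j, c). (c 1, c 2)) ` supp f \<subseteq> insert ab S"
      and mon: "\<forall>(a, b)\<in>insert ab S. \<exists>j0. sm j0 (mon12 a b) \<in> generate_ring (quantum_torus m L) H"
    define f2 where "f2 = (\<lambda>p. f p - res12 a b f p)"
    have f2c: "f2 \<in> qt_carrier m"
      using add_carrier[OF f neg_carrier[OF res12_carrier[OF f]]] by (simp add: f2_def)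
    have "(\<lambda>(j, c). (c 1, c 2)) ` supp f2 \<subseteq> S"
    proof
      fix x assume "x \<in> (\<lambda>(j, c). (c 1, c 2)) ` supp f2"
      then obtain j c where jc: "x = (c 1, c 2)" "f2 (j, c) \<noteq> 0" by (auto simp: supp_def)
      then have "f (j, c) \<noteq> 0" "\<not> (c 1 = a \<and> c 2 = b)" by (auto simp: f2_def res12_def split: if_splits)
      then have "(c 1, c 2) \<in> insert ab S" using sf by (force simp: supp_def)
      moreover have "(c 1, c 2) \<noteq> ab" using \<open>\<not> (c 1 = a \<and> c 2 = b)\<close> ab by simp
      ultimately show "x \<in> S" using jc by simp
    qed
    moreover have "\<forall>(a, b)\<in>S. \<exists>j0. sm j0 (mon12 a b) \<in> generate_ring (quantum_torus m L) H"
      using mon by simp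
    ultimately have g2: "f2 \<in> generate_ring (quantum_torus m L) H" using insert.IH f2c by simp
    obtain j0 where "sm j0 (mon12 a b) \<in> generate_ring (quantum_torus m L) H" using mon ab by auto
    then have g1: "res12 a b f \<in> generate_ring (quantum_torus m L) H"
      by (rule res12_in_gen[OF m2 H f])
    have "f = (\<lambda>p. res12 a b f p + f2 p)" by (auto simp: f2_def)
    then show "f \<in> generate_ring (quantum_torus m L) H"
      using generate_ring.eng_add[OF g1 g2] by simp
  qed
qed

lemma gen_decomp:
  assumes m2: "2 \<le> m" and H: "ZP m 2 \<subseteq> H" and Hc: "H \<subseteq> qt_carrier m" and f: "f \<in> qt_carrier m"
    and mon: "\<forall>j c. f (j, c) \<noteq> 0 \<longrightarrow> (\<exists>j0. sm j0 (mon12 (c 1) (c 2)) \<in> generate_ring (quantum_torus m L) H)"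
  shows "f \<in> generate_ring (quantum_torus m L) H"
proof -
  have "finite ((\<lambda>(j, c). (c 1, c 2)) ` supp f)" using carrier_finite[OF f] by blast
  moreover have "\<forall>(a, b)\<in>(\<lambda>(j, c). (c 1, c 2)) ` supp f. \<exists>j0. sm j0 (mon12 a b) \<in> generate_ring (quantum_torus m L) H"
    using mon by (auto simp: supp_def)
  ultimately show ?thesis using gen_decomp_aux[OF m2 H Hc] f by blast
qed

lemma gen_pow:
  assumes "qX v \<in> generate_ring (quantum_torus m L) H" "v \<in> zvec m" "bil m L v v = 0"
  shows "qX (\<lambda>k. int n * v k) \<in> generate_ring (quantum_torus m L) H"
proof (induction n)
  case 0
  have "qX (\<lambda>k. int 0 * v k) = qone" by (simp add: qX_sm qone_sm zero_fun_def)
  then show ?case using generate_ring.one[of "quantum_torus m L" H] by simp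
next
  case (Suc n)
  have nz: "(\<lambda>k. int n * v k) \<in> zvec m" using assms(2) by (simp add: zvec_def)
  have "qt_mult m L (qX v) (qX (\<lambda>k. int n * v k)) = sm (bil m L v (\<lambda>k. int n * v k)) (v + (\<lambda>k. int n * v k))"
    unfolding qX_sm by (simp add: sm_mult[OF assms(2) nz])
  also have "\<dots> = qX (\<lambda>k. int (Suc n) * v k)"
    by (simp add: bil_scale_right assms(3) qX_sm plus_fun_def algebra_simps)
  finally show ?case using generate_ring.eng_mult[OF assms(1) Suc.IH] by simp
qed


lemma bil_skew_gen:
  assumes "skew_sym m L"
  shows "bil m L a b = - bil m L b a"
proof -
  have "bil m L a b = (\<Sum>l\<in>{1..m}. \<Sum>k\<in>{1..m}. a k * L k l * b l)"
    unfolding bil_def by (rule sum.swap)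
  also have "\<dots> = (\<Sum>l\<in>{1..m}. \<Sum>k\<in>{1..m}. - (b l * L l k * a k))"
  proof (intro sum.cong refl)
    fix l k assume "l \<in> {1..m}" "k \<in> {1..m}"
    then have "L k l = - L l k" using assms unfolding skew_sym_def by blast
    then show "a k * L k l * b l = - (b l * L l k * a k)" by simp
  qed
  also have "\<dots> = - bil m L b a" by (simp add: bil_def sum_negf)
  finally show ?thesis .
qed

lemma gen_supp_pred:
  assumes P0: "P 0" and Padd: "\<And>a b. P a \<Longrightarrow> P b \<Longrightarrow> P (a + b)"
    and Hc: "H \<subseteq> qt_carrier m"
    and HP: "\<And>f j c. f \<in> H \<Longrightarrow> f (j, c) \<noteq> 0 \<Longrightarrow> P c"
    and f: "f \<in> generate_ring (quantum_torus m L) H"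
  shows "f \<in> qt_carrier m \<and> (\<forall>j c. f (j, c) \<noteq> 0 \<longrightarrow> P c)"
  using f
proof (induction rule: generate_ring.induct)
  case one
  have "\<forall>j c. qone (j, c) \<noteq> 0 \<longrightarrow> P c"
    by (auto simp: qone_def P0 zero_fun_def[symmetric] split: if_splits)
  then show ?case using qone_carrier by simp
next
  case (incl h)
  then show ?case using Hc HP by blast
next
  case (a_inv h)
  then show ?case by (simp add: qt_a_inv neg_carrier)
next
  case (eng_add h1 h2)
  have "\<forall>j c. h1 (j, c) + h2 (j, c) \<noteq> 0 \<longrightarrow> P c"
  proof (intro allI impI)
    fix j c assume "h1 (j, c) + h2 (j, c) \<noteq> 0"
    then have "h1 (j, c) \<noteq> 0 \<or> h2 (j, c) \<noteq> 0" by auto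
    then show "P c" using eng_add.IH by blast
  qed
  then show ?case using eng_add.IH add_carrier by simp
next
  case (eng_mult h1 h2)
  have c: "h1 \<in> qt_carrier m" "h2 \<in> qt_carrier m" using eng_mult.IH by auto
  have "\<forall>j c. qt_mult m L h1 h2 (j, c) \<noteq> 0 \<longrightarrow> P c"
  proof (intro allI impI)
    fix j c assume "qt_mult m L h1 h2 (j, c) \<noteq> 0"
    then obtain p q where pq: "h1 p \<noteq> 0" "h2 q \<noteq> 0" "star m L p q = (j, c)"
      using qt_mult_supp[OF c, of L "(j, c)"] by blast
    have "P (snd p)" using eng_mult.IH pq(1) by (metis prod.collapse)
    moreover have "P (snd q)" using eng_mult.IH pq(2) by (metis prod.collapse)
    moreover have "c = snd p + snd q" using pq(3) by (auto simp: star_def)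
    ultimately show "P c" using Padd by simp
  qed
  then show ?case using qt_mult_closed[OF c] by simp
qed

lemma gen_mono:
  assumes "H \<subseteq> H'" "f \<in> generate_ring R H"
  shows "f \<in> generate_ring R H'"
  using assms(2)
proof (induction rule: generate_ring.induct)
  case one then show ?case by (rule generate_ring.one)
next
  case (incl h) then show ?case using assms(1) by (auto intro: generate_ring.incl)
next
  case (a_inv h) show ?case by (rule generate_ring.a_inv[OF a_inv.IH])
next
  case (eng_add h1 h2) show ?case by (rule generate_ring.eng_add[OF eng_add.IH])
next
  case (eng_mult h1 h2) show ?case by (rule generate_ring.eng_mult[OF eng_mult.IH])
qed

lemma mon12_add: "mon12 a 0 + mon12 0 b = mon12 a b"
  by (auto simp: mon12_def)

lemma mon_prod:
  assumes m2: "2 \<le> m"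
    and "qX (mon12 a 0) \<in> generate_ring (quantum_torus m L) H"
    and "qX (mon12 0 b) \<in> generate_ring (quantum_torus m L) H"
  shows "\<exists>j0. sm j0 (mon12 a b) \<in> generate_ring (quantum_torus m L) H"
proof -
  have eq: "qt_mult m L (qX (mon12 a 0)) (qX (mon12 0 b)) = sm (bil m L (mon12 a 0) (mon12 0 b)) (mon12 a b)"
    unfolding qX_sm sm_mult[OF mon12_zvec[OF m2] mon12_zvec[OF m2]] mon12_add by simp
  have "qt_mult m L (qX (mon12 a 0)) (qX (mon12 0 b)) \<in> generate_ring (quantum_torus m L) H"
    using generate_ring.eng_mult[OF assms(2,3)] by simp
  then show ?thesis unfolding eq by (rule exI)
qed

lemma ebasis_zvec: "i \<in> {1..m} \<Longrightarrow> ebasis i \<in> zvec m"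
  by (auto simp: ebasis_def zvec_def)

lemma mon12_a: "mon12 (int n) 0 = (\<lambda>k. int n * ebasis 1 k)"
  by (auto simp: mon12_def ebasis_def)
lemma mon12_b: "mon12 0 (int n) = (\<lambda>k. int n * ebasis 2 k)"
  by (auto simp: mon12_def ebasis_def)
lemma mon12_bneg: "mon12 0 (- int n) = (\<lambda>k. int n * (- ebasis 2 k))"
  by (auto simp: mon12_def ebasis_def)


locale seed =
  fixes m :: nat and L B :: "nat \<Rightarrow> nat \<Rightarrow> int" and d :: "nat \<Rightarrow> nat"
    and h :: "nat \<Rightarrow> nat \<Rightarrow> int \<Rightarrow> int"
  assumes qs: "quantum_seed m 2 L B d h"
begin

lemma m2: "2 \<le> m" using qs by (simp add: quantum_seed_def)

lemma skew: "skew_sym m L" using qs by (simp add: quantum_seed_def compatible_pair_def)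

lemma bil_skew: "bil m L a b = - bil m L b a" by (rule bil_skew_gen[OF skew])

lemma bil_self: "bil m L a a = 0" using bil_skew[of a a] by simp

lemma d2pos: "d 2 > 0" using qs by (auto simp: quantum_seed_def)

lemma d2dvd: "j \<in> {1..m} \<Longrightarrow> int (d 2) dvd B j 2" using qs by (auto simp: quantum_seed_def)

lemma hvalid: "valid_h 2 d h" using qs by (simp add: quantum_seed_def)

lemma hall: "(\<forall>r\<in>{0..d 2}. finite {j. h 2 r j \<noteq> 0}) \<and>
      (\<forall>r\<in>{0..d 2}. h 2 r = h 2 (d 2 - r)) \<and>
      h 2 0 = (\<lambda>j. if j = 0 then 1 else 0) \<and>
      h 2 (d 2) = (\<lambda>j. if j = 0 then 1 else 0)"
proof -
  have "(2::nat) \<in> {1..2}" by simp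
  then show ?thesis by (rule bspec[OF hvalid[unfolded valid_h_def]])
qed

lemma h0: "h 2 0 = (\<lambda>j. if j = 0 then 1 else 0)" and hd: "h 2 (d 2) = (\<lambda>j. if j = 0 then 1 else 0)"
  and hfin: "r \<in> {0..d 2} \<Longrightarrow> finite {j. h 2 r j \<noteq> 0}"
  using hall by blast+

lemma Dex: "\<exists>D :: nat \<Rightarrow> int. (\<forall>k\<in>{1..2}. D k > 0) \<and>
        (\<forall>k\<in>{1..m}. \<forall>l\<in>{1..2}. (\<Sum>j\<in>{1..m}. L k j * B j l) = (if k = l then - D k else 0))"
  using qs by (simp add: quantum_seed_def compatible_pair_def)

abbreviation "beta2 \<equiv> beta m B d 2"

lemma beta_B: "j \<in> {1..m} \<Longrightarrow> B j 2 = int (d 2) * beta2 j"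
  using d2dvd[of j] by (simp add: beta_def)

lemma beta_out: "j \<notin> {1..m} \<Longrightarrow> beta2 j = 0"
  unfolding beta_def by (rule if_not_P)

lemma col_rel: "k \<in> {1..m} \<Longrightarrow> k \<noteq> 2 \<Longrightarrow> (\<Sum>j\<in>{1..m}. L k j * beta2 j) = 0"
  and col_rel2: "(\<Sum>j\<in>{1..m}. L 2 j * beta2 j) \<noteq> 0"
  and B22: "beta2 2 = 0"
proof -
  obtain D :: "nat \<Rightarrow> int" where Dp: "\<forall>k\<in>{1..2}. D k > 0"
    and Dr: "\<forall>k\<in>{1..m}. \<forall>l\<in>{1..2}. (\<Sum>j\<in>{1..m}. L k j * B j l) = (if k = l then - D k else 0)"
    using Dex by blast
  have Dr2: "\<And>k. k \<in> {1..m} \<Longrightarrow> (\<Sum>j\<in>{1..m}. L k j * B j 2) = (if k = 2 then - D k else 0)"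
  proof -
    fix k :: nat assume k: "k \<in> {1..m}"
    have "(2::nat) \<in> {1..2}" by simp
    then show "(\<Sum>j\<in>{1..m}. L k j * B j 2) = (if k = 2 then - D k else 0)"
      using Dr k by blast
  qed
  have D2: "D 2 > 0" using Dp by simp
  have d0: "int (d 2) > 0" using d2pos by simp
  have eq: "\<And>k. (\<Sum>j\<in>{1..m}. L k j * B j 2) = int (d 2) * (\<Sum>j\<in>{1..m}. L k j * beta2 j)"
  proof -
    fix k
    have "(\<Sum>j\<in>{1..m}. L k j * B j 2) = (\<Sum>j\<in>{1..m}. int (d 2) * (L k j * beta2 j))"
      by (rule sum.cong) (simp_all add: beta_B)
    also have "\<dots> = int (d 2) * (\<Sum>j\<in>{1..m}. L k j * beta2 j)" by (simp add: sum_distrib_left)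
    finally show "(\<Sum>j\<in>{1..m}. L k j * B j 2) = int (d 2) * (\<Sum>j\<in>{1..m}. L k j * beta2 j)" .
  qed
  {
    fix k assume k: "k \<in> {1..m}" "k \<noteq> 2"
    have "(\<Sum>j\<in>{1..m}. L k j * B j 2) = 0" using Dr2[OF k(1)] k(2) by simp
    then show "(\<Sum>j\<in>{1..m}. L k j * beta2 j) = 0" using eq[of k] d0 by simp
  }
  have two: "(2::nat) \<in> {1..m}" using m2 by simp
  have "(\<Sum>j\<in>{1..m}. L 2 j * B j 2) = - D 2" using Dr2[OF two] by simp
  then show "(\<Sum>j\<in>{1..m}. L 2 j * beta2 j) \<noteq> 0" using eq[of 2] D2 by auto
  define col where "col = (\<lambda>j. B j 2)"
  have "bil m L col col = (\<Sum>k\<in>{1..m}. col k * (\<Sum>j\<in>{1..m}. L k j * B j 2))"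
    unfolding bil_def col_def sum_distrib_left by (simp add: mult.assoc)
  also have "\<dots> = (\<Sum>k\<in>{1..m}. if k = 2 then col k * (- D 2) else 0)"
  proof (rule sum.cong[OF refl])
    fix k assume k: "k \<in> {1..m}"
    show "col k * (\<Sum>j\<in>{1..m}. L k j * B j 2) = (if k = 2 then col k * (- D 2) else 0)"
      using Dr2[OF k] by simp
  qed
  also have "\<dots> = col 2 * (- D 2)" using two by simp
  finally have "B 2 2 * D 2 = 0" using bil_self[of col] by (simp add: col_def)
  then have "B 2 2 = 0" using D2 by simp
  then show "beta2 2 = 0" by (simp add: beta_def)
qed

lemma bil_beta_right: "u 2 = 0 \<Longrightarrow> bil m L u beta2 = 0"
proof -
  assume u: "u 2 = 0"
  have "bil m L u beta2 = (\<Sum>k\<in>{1..m}. u k * (\<Sum>j\<in>{1..m}. L k j * beta2 j))"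
    by (simp add: bil_def sum_distrib_left algebra_simps)
  also have "\<dots> = 0"
  proof (rule sum.neutral, rule ballI)
    fix k assume k: "k \<in> {1..m}"
    show "u k * (\<Sum>j\<in>{1..m}. L k j * beta2 j) = 0"
    proof (cases "k = 2")
      case True then show ?thesis using u by simp
    next
      case False then show ?thesis using col_rel[OF k] by simp
    qed
  qed
  finally show ?thesis .
qed

lemma bil_beta_left: "u 2 = 0 \<Longrightarrow> bil m L beta2 u = 0"
proof -
  assume u: "u 2 = 0"
  have "bil m L beta2 u = - bil m L u beta2" by (rule bil_skew)
  then show ?thesis using bil_beta_right[of u, OF u] by simp
qed

lemma beta_nz: "\<exists>i\<in>{1..m}. beta2 i \<noteq> 0"
proof (rule ccontr)
  assume "\<not> (\<exists>i\<in>{1..m}. beta2 i \<noteq> 0)"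
  then have "\<forall>i\<in>{1..m}. beta2 i = 0" by blast
  then have "(\<Sum>j\<in>{1..m}. L 2 j * beta2 j) = 0" by simp
  then show False using col_rel2 by simp
qed


definition "Yv = mut_var m B d h 2"

definition wv :: "nat \<Rightarrow> nat \<Rightarrow> int" where
  "wv r = (\<lambda>k. int r * posp beta2 k + int (d 2 - r) * posp (\<lambda>l. - beta2 l) k - ebasis 2 k)"

definition "w0 = (\<lambda>k. int (d 2) * posp (\<lambda>l. - beta2 l) k - ebasis 2 k)"

lemma Yv_eq: "Yv (j, c) = (\<Sum>r\<in>{0..d 2}. if c = wv r then h 2 r j else 0)"
  by (simp add: Yv_def mut_var_def wv_def)

lemma wv_eq: "r \<le> d 2 \<Longrightarrow> wv r = w0 + (\<lambda>k. int r * beta2 k)"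
proof (rule ext)
  fix k assume r: "r \<le> d 2"
  have "int (d 2 - r) = int (d 2) - int r" using r by simp
  then show "wv r k = (w0 + (\<lambda>k. int r * beta2 k)) k"
    by (cases "beta2 k \<ge> 0") (auto simp: wv_def w0_def posp_def max_def algebra_simps)
qed

lemma wv_2: "wv r 2 = -1"
  using B22 by (simp add: wv_def posp_def ebasis_def)

lemma wv_1: "wv r 1 \<ge> 0"
  by (simp add: wv_def posp_def ebasis_def)

lemma wv_zvec: "wv r \<in> zvec m"
proof -
  have "\<And>k. k \<notin> {1..m} \<Longrightarrow> wv r k = 0"
  proof -
    fix k :: nat assume k: "k \<notin> {1..m}"
    have "k \<noteq> 2" using k m2 by auto
    then show "wv r k = 0" using beta_out[OF k] by (simp add: wv_def posp_def ebasis_def)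
  qed
  then show ?thesis by (simp add: zvec_def)
qed

lemma Yv_supp: "Yv (j, c) \<noteq> 0 \<Longrightarrow> \<exists>r\<in>{0..d 2}. c = wv r \<and> h 2 r j \<noteq> 0"
proof -
  assume "Yv (j, c) \<noteq> 0"
  then have "(\<Sum>r\<in>{0..d 2}. if c = wv r then h 2 r j else 0) \<noteq> 0" by (simp add: Yv_eq)
  then obtain r where "r \<in> {0..d 2}" "(if c = wv r then h 2 r j else 0) \<noteq> 0"
    by (rule sum.not_neutral_contains_not_neutral)
  then show ?thesis by (auto split: if_splits)
qed

lemma Yv_carrier: "Yv \<in> qt_carrier m"
proof -
  let ?S = "\<Union>r\<in>{0..d 2}. (\<lambda>j. (j, wv r)) ` {j. h 2 r j \<noteq> 0}"
  have "supp Yv \<subseteq> ?S"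
  proof
    fix p assume "p \<in> supp Yv"
    obtain j c where p: "p = (j, c)" by fastforce
    then have "Yv (j, c) \<noteq> 0" using \<open>p \<in> supp Yv\<close> by (simp add: supp_def)
    then obtain r where "r \<in> {0..d 2}" "c = wv r" "h 2 r j \<noteq> 0" using Yv_supp by blast
    then show "p \<in> ?S" using p by blast
  qed
  moreover have "finite ?S" using hfin by auto
  ultimately have "finite (supp Yv)" using finite_subset by blast
  moreover have "\<forall>j c. Yv (j, c) \<noteq> 0 \<longrightarrow> c \<in> zvec m"
    using Yv_supp wv_zvec by blast
  ultimately show ?thesis by (simp add: qt_carrier_def supp_def)
qed

lemma wv_inj: "r \<le> d 2 \<Longrightarrow> r' \<le> d 2 \<Longrightarrow> wv r = wv r' \<Longrightarrow> r = r'"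
proof -
  assume r: "r \<le> d 2" "r' \<le> d 2" "wv r = wv r'"
  obtain i where i: "beta2 i \<noteq> 0" using beta_nz by blast
  have "wv r i = wv r' i" using r(3) by simp
  then have "int r * beta2 i = int r' * beta2 i" using wv_eq[OF r(1)] wv_eq[OF r(2)] by simp
  then show "r = r'" using i by simp
qed

lemma Yv_at: "r0 \<le> d 2 \<Longrightarrow> Yv (j, wv r0) = h 2 r0 j"
proof -
  assume r0: "r0 \<le> d 2"
  have "Yv (j, wv r0) = (\<Sum>r\<in>{0..d 2}. if r = r0 then h 2 r j else 0)"
    unfolding Yv_eq
  proof (rule sum.cong[OF refl])
    fix r assume "r \<in> {0..d 2}"
    then have "(wv r0 = wv r) = (r = r0)" using wv_inj[OF r0, of r] by auto
    then show "(if wv r0 = wv r then h 2 r j else 0) = (if r = r0 then h 2 r j else 0)" by simp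
  qed
  also have "\<dots> = h 2 r0 j" using r0 by (simp add: sum.delta')
  finally show ?thesis .
qed

end


context seed
begin

definition "X1 = qX (ebasis 1)"
definition "X1i = qX (\<lambda>k. - ebasis 1 k)"
definition "X2 = qX (ebasis 2)"
definition "X2i = qX (\<lambda>k. - ebasis 2 k)"

definition "HA = ZP m 2 \<union> {X1, X2, X2i}"
definition "HB = ZP m 2 \<union> {X1, X1i, X2, Yv}"
definition "HR = ZP m 2 \<union> {X1, X2, Yv}"

abbreviation "QT \<equiv> quantum_torus m L"

lemma e1z: "ebasis 1 \<in> zvec m" and e2z: "ebasis 2 \<in> zvec m"
  and e1nz: "(\<lambda>k. - ebasis 1 k) \<in> zvec m" and e2nz: "(\<lambda>k. - ebasis 2 k) \<in> zvec m"
  using m2 by (auto simp: ebasis_def zvec_def)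

lemma X_carrier: "X1 \<in> qt_carrier m" "X1i \<in> qt_carrier m" "X2 \<in> qt_carrier m" "X2i \<in> qt_carrier m"
  unfolding X1_def X1i_def X2_def X2i_def qX_sm
  by (rule sm_carrier[OF e1z], rule sm_carrier[OF e1nz], rule sm_carrier[OF e2z], rule sm_carrier[OF e2nz])

lemma HA_c: "HA \<subseteq> qt_carrier m" and HB_c: "HB \<subseteq> qt_carrier m" and HR_c: "HR \<subseteq> qt_carrier m"
  using X_carrier Yv_carrier ZP_carrier[of m 2] by (auto simp: HA_def HB_def HR_def)

lemma pow_in:
  assumes "qX v \<in> generate_ring QT H" "v \<in> zvec m"
  shows "qX (\<lambda>k. int n * v k) \<in> generate_ring QT H"
  by (rule gen_pow[OF assms bil_self])

lemma monA: "a \<ge> 0 \<Longrightarrow> \<exists>j0. sm j0 (mon12 a b) \<in> generate_ring QT HA"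
proof -
  assume a: "a \<ge> 0"
  obtain n where n: "a = int n" using a nonneg_int_cases by blast
  have "qX (ebasis 1) \<in> generate_ring QT HA" by (rule generate_ring.incl) (unfold HA_def X1_def, blast)
  then have A: "qX (mon12 a 0) \<in> generate_ring QT HA"
    unfolding n mon12_a by (rule pow_in[OF _ e1z])
  have Bq: "qX (mon12 0 b) \<in> generate_ring QT HA"
  proof (cases "b \<ge> 0")
    case True
    then obtain k where k: "b = int k" using nonneg_int_cases by blast
    have "qX (ebasis 2) \<in> generate_ring QT HA" by (rule generate_ring.incl) (unfold HA_def X2_def, blast)
    then show ?thesis unfolding k mon12_b by (rule pow_in[OF _ e2z])
  next
    case False
    define k where "k = nat (- b)"
    have k: "b = - int k" using False by (simp add: k_def)
    have "qX (\<lambda>k. - ebasis 2 k) \<in> generate_ring QT HA" by (rule generate_ring.incl) (unfold HA_def X2i_def, blast)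
    then show ?thesis unfolding k mon12_bneg by (rule pow_in[OF _ e2nz])
  qed
  show ?thesis by (rule mon_prod[OF m2 A Bq])
qed

lemma monR: "a \<ge> 0 \<Longrightarrow> b \<ge> 0 \<Longrightarrow> \<exists>j0. sm j0 (mon12 a b) \<in> generate_ring QT HR"
proof -
  assume a: "a \<ge> 0" and b: "b \<ge> 0"
  obtain n where n: "a = int n" using a nonneg_int_cases by blast
  obtain k where k: "b = int k" using b nonneg_int_cases by blast
  have "qX (ebasis 1) \<in> generate_ring QT HR" by (rule generate_ring.incl) (unfold HR_def X1_def, blast)
  then have A: "qX (mon12 a 0) \<in> generate_ring QT HR"
    unfolding n mon12_a by (rule pow_in[OF _ e1z])
  have "qX (ebasis 2) \<in> generate_ring QT HR" by (rule generate_ring.incl) (unfold HR_def X2_def, blast)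
  then have Bq: "qX (mon12 0 b) \<in> generate_ring QT HR"
    unfolding k mon12_b by (rule pow_in[OF _ e2z])
  show ?thesis by (rule mon_prod[OF m2 A Bq])
qed

lemma Yv_in_A: "Yv \<in> generate_ring QT HA"
proof (rule gen_decomp[OF m2 _ HA_c Yv_carrier])
  show "ZP m 2 \<subseteq> HA" by (auto simp: HA_def)
  show "\<forall>j c. Yv (j, c) \<noteq> 0 \<longrightarrow> (\<exists>j0. sm j0 (mon12 (c 1) (c 2)) \<in> generate_ring QT HA)"
  proof (intro allI impI)
    fix j c assume "Yv (j, c) \<noteq> 0"
    then obtain r where "c = wv r" using Yv_supp by blast
    then have "c 1 \<ge> 0" using wv_1 by simp
    then show "\<exists>j0. sm j0 (mon12 (c 1) (c 2)) \<in> generate_ring QT HA" by (rule monA)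
  qed
qed

lemma GR_sub_GA: "generate_ring QT HR \<subseteq> generate_ring QT HA"
proof -
  interpret ring QT by (rule qt_ring)
  have sub: "subring (generate_ring QT HA) QT"
    by (rule generate_ring_is_subring) (use HA_c in simp)
  have "HR \<subseteq> generate_ring QT HA"
  proof
    fix g assume "g \<in> HR"
    then have "g \<in> HA \<or> g = Yv" by (unfold HR_def HA_def, blast)
    then show "g \<in> generate_ring QT HA"
    proof
      assume "g \<in> HA" then show ?thesis by (rule generate_ring.incl)
    next
      assume "g = Yv" then show ?thesis using Yv_in_A by simp
    qed
  qed
  then show ?thesis
    by (intro generate_ring_min_subring1[OF _ sub]) (use HR_c in simp_all)
qed

lemma GR_sub_GB: "generate_ring QT HR \<subseteq> generate_ring QT HB"
proof
  fix f assume "f \<in> generate_ring QT HR"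
  then show "f \<in> generate_ring QT HB"
    by (rule gen_mono[rotated]) (auto simp: HR_def HB_def)
qed

definition "S1 = {f \<in> qt_carrier m. \<forall>j c. f (j, c) \<noteq> 0 \<longrightarrow> c 1 \<ge> 0}"

lemma GA_S1: "generate_ring QT HA \<subseteq> S1"
proof
  fix f assume f: "f \<in> generate_ring QT HA"
  have "f \<in> qt_carrier m \<and> (\<forall>j c. f (j, c) \<noteq> 0 \<longrightarrow> c 1 \<ge> 0)"
  proof (rule gen_supp_pred[OF _ _ HA_c _ f])
    show "(0::nat\<Rightarrow>int) 1 \<ge> 0" by simp
    show "\<And>a b :: nat \<Rightarrow> int. 0 \<le> a 1 \<Longrightarrow> 0 \<le> b 1 \<Longrightarrow> 0 \<le> (a + b) 1" by simp
    fix g j c assume g: "g \<in> HA" "g (j, c) \<noteq> 0"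
    show "c 1 \<ge> 0"
    proof (cases "g \<in> ZP m 2")
      case True
      then have "\<forall>k\<in>{1..2::nat}. c k = 0" using g(2) unfolding ZP_def by blast
      then have "c 1 = 0" by (metis atLeastAtMost_iff le_numeral_extra(4) one_le_numeral)
      then show ?thesis by simp
    next
      case False
      then have "g = X1 \<or> g = X2 \<or> g = X2i" using g(1) by (auto simp: HA_def)
      then show ?thesis using g(2)
        by (auto simp: X1_def X2_def X2i_def qX_def ebasis_def split: if_splits)
    qed
  qed
  then show "f \<in> S1" by (simp add: S1_def)
qed

end


definition tw :: "((nat \<Rightarrow> int) \<Rightarrow> int) \<Rightarrow> ((int \<times> (nat \<Rightarrow> int)) \<Rightarrow> int) \<Rightarrow> ((int \<times> (nat \<Rightarrow> int)) \<Rightarrow> int)" where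
  "tw \<theta> g = (\<lambda>(j, c). g (j - \<theta> c, c))"

lemma tw_apply[simp]: "tw \<theta> g (j, c) = g (j - \<theta> c, c)"
  by (simp add: tw_def)

lemma supp_tw: "supp (tw \<theta> g) = (\<lambda>(j, c). (j + \<theta> c, c)) ` supp g"
proof
  show "supp (tw \<theta> g) \<subseteq> (\<lambda>(j, c). (j + \<theta> c, c)) ` supp g"
  proof
    fix p assume p: "p \<in> supp (tw \<theta> g)"
    obtain j c where pj: "p = (j, c)" by fastforce
    have "(j - \<theta> c, c) \<in> supp g" using p by (simp add: pj supp_def)
    moreover have "p = (\<lambda>(j, c). (j + \<theta> c, c)) (j - \<theta> c, c)" by (simp add: pj)
    ultimately show "p \<in> (\<lambda>(j, c). (j + \<theta> c, c)) ` supp g" by blast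
  qed
  show "(\<lambda>(j, c). (j + \<theta> c, c)) ` supp g \<subseteq> supp (tw \<theta> g)"
    by (auto simp: supp_def)
qed

lemma tw_carrier: "g \<in> qt_carrier m \<Longrightarrow> tw \<theta> g \<in> qt_carrier m"
proof -
  assume g: "g \<in> qt_carrier m"
  have "finite (supp (tw \<theta> g))" using carrier_finite[OF g] by (simp add: supp_tw)
  moreover have "\<forall>j c. tw \<theta> g (j, c) \<noteq> 0 \<longrightarrow> c \<in> zvec m"
    using g by (auto simp: qt_carrier_def)
  ultimately show ?thesis by (simp add: qt_carrier_def supp_def)
qed

lemma comm_tw:
  assumes f: "f \<in> qt_carrier m" and g: "g \<in> qt_carrier m"
    and cond: "\<And>p q. f p \<noteq> 0 \<Longrightarrow> g q \<noteq> 0 \<Longrightarrow> bil m L (snd q) (snd p) + \<theta> (snd q) = bil m L (snd p) (snd q)"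
  shows "qt_mult m L f g = qt_mult m L (tw \<theta> g) f"
proof
  fix x
  define sh where "sh = (\<lambda>(j::int, c::nat\<Rightarrow>int). (j + \<theta> c, c))"
  have inj: "inj_on sh (supp g)" by (rule inj_onI) (auto simp: sh_def)
  have ff: "finite (supp f)" "finite (supp g)" using carrier_finite f g by auto
  have "qt_mult m L (tw \<theta> g) f x = (\<Sum>q'\<in>sh ` supp g. \<Sum>p\<in>supp f. if star m L q' p = x then tw \<theta> g q' * f p else 0)"
    by (rule qt_mult_conv) (use ff in \<open>auto simp: supp_tw sh_def\<close>)
  also have "\<dots> = (\<Sum>q\<in>supp g. \<Sum>p\<in>supp f. if star m L (sh q) p = x then tw \<theta> g (sh q) * f p else 0)"
    by (rule sum.reindex[OF inj, unfolded comp_def])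
  also have "\<dots> = (\<Sum>q\<in>supp g. \<Sum>p\<in>supp f. if star m L p q = x then f p * g q else 0)"
  proof (intro sum.cong refl)
    fix q p assume q: "q \<in> supp g" and p: "p \<in> supp f"
    obtain jq cq where qq: "q = (jq, cq)" by fastforce
    obtain jp cp where pp: "p = (jp, cp)" by fastforce
    have c: "bil m L cq cp + \<theta> cq = bil m L cp cq" using cond[of p q] p q by (simp add: supp_def qq pp)
    have "star m L (sh q) p = star m L p q"
      using c by (simp add: star_def sh_def qq pp algebra_simps)
    moreover have "tw \<theta> g (sh q) = g q" by (simp add: sh_def qq)
    ultimately show "(if star m L (sh q) p = x then tw \<theta> g (sh q) * f p else 0) = (if star m L p q = x then f p * g q else 0)"
      by (simp add: mult.commute)
  qed
  also have "\<dots> = (\<Sum>p\<in>supp f. \<Sum>q\<in>supp g. if star m L p q = x then f p * g q else 0)"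
    by (rule sum.swap)
  also have "\<dots> = qt_mult m L f g x"
    by (rule qt_mult_conv[symmetric]) (use ff in auto)
  finally show "qt_mult m L f g x = qt_mult m L (tw \<theta> g) f x" ..
qed


lemma prod_coord:
  assumes f: "f \<in> qt_carrier m" and g: "g \<in> qt_carrier m"
    and sf: "\<And>j c. f (j, c) \<noteq> 0 \<Longrightarrow> c i = s" and sg: "\<And>j c. g (j, c) \<noteq> 0 \<Longrightarrow> c i = t"
    and nz: "qt_mult m L f g (j, c) \<noteq> 0"
  shows "c i = s + t"
proof -
  obtain p q where pq: "f p \<noteq> 0" "g q \<noteq> 0" "star m L p q = (j, c)"
    using qt_mult_supp[OF f g nz] by blast
  have "snd p i = s" using sf pq(1) by (metis prod.collapse)
  moreover have "snd q i = t" using sg pq(2) by (metis prod.collapse)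
  moreover have "c = snd p + snd q" using pq(3) by (auto simp: star_def)
  ultimately show ?thesis by simp
qed

context seed
begin

definition "T0 = {f \<in> qt_carrier m. \<forall>j c. f (j, c) \<noteq> 0 \<longrightarrow> c 2 = 0}"

lemma T0_mult: "a \<in> T0 \<Longrightarrow> b \<in> T0 \<Longrightarrow> qt_mult m L a b \<in> T0"
proof -
  assume a: "a \<in> T0" and b: "b \<in> T0"
  have ac: "a \<in> qt_carrier m" "b \<in> qt_carrier m" using a b by (auto simp: T0_def)
  have "\<forall>j c. qt_mult m L a b (j, c) \<noteq> 0 \<longrightarrow> c 2 = 0"
  proof (intro allI impI)
    fix j c assume nz: "qt_mult m L a b (j, c) \<noteq> 0"
    have "c 2 = 0 + 0"
      by (rule prod_coord[OF ac _ _ nz]) (use a b in \<open>auto simp: T0_def\<close>)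
    then show "c 2 = 0" by simp
  qed
  then show ?thesis using qt_mult_closed[OF ac] by (simp add: T0_def)
qed

lemma T0_tw: "a \<in> T0 \<Longrightarrow> tw \<theta> a \<in> T0"
  by (auto simp: T0_def tw_carrier)

lemma T0_add: "a \<in> T0 \<Longrightarrow> b \<in> T0 \<Longrightarrow> (\<lambda>p. a p + b p) \<in> T0"
proof -
  assume a: "a \<in> T0" and b: "b \<in> T0"
  have "\<forall>j c. a (j, c) + b (j, c) \<noteq> 0 \<longrightarrow> c 2 = 0"
  proof (intro allI impI)
    fix j c assume "a (j, c) + b (j, c) \<noteq> 0"
    then have "a (j, c) \<noteq> 0 \<or> b (j, c) \<noteq> 0" by auto
    then show "c 2 = 0" using a b by (auto simp: T0_def)
  qed
  then show ?thesis using a b add_carrier by (auto simp: T0_def)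
qed

lemma T0_neg: "a \<in> T0 \<Longrightarrow> (\<lambda>p. - a p) \<in> T0"
  by (auto simp: T0_def neg_carrier)

lemma T0_qone: "qone \<in> T0"
  using qone_carrier by (auto simp: T0_def qone_def split: if_splits)

lemma T0_zero: "(\<lambda>_. 0) \<in> T0"
  by (simp add: T0_def zero_carrier_lem)

lemma ZP_T0: "ZP m 2 \<subseteq> T0"
proof
  fix f assume f: "f \<in> ZP m 2"
  have "\<forall>j c. f (j, c) \<noteq> 0 \<longrightarrow> c 2 = 0"
  proof (intro allI impI)
    fix j c assume "f (j, c) \<noteq> 0"
    then have "\<forall>k\<in>{1..2::nat}. c k = 0" using f unfolding ZP_def by blast
    then show "c 2 = 0" by simp
  qed
  then show "f \<in> T0" using f by (simp add: T0_def ZP_def)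
qed

lemma X1_T0: "X1 \<in> T0" and X1i_T0: "X1i \<in> T0"
  using X_carrier by (auto simp: T0_def X1_def X1i_def qX_def ebasis_def split: if_splits)

definition "x2p b = qX (\<lambda>k. int b * ebasis 2 k)"

lemma x2p_carrier: "x2p b \<in> qt_carrier m"
  unfolding x2p_def qX_sm by (rule sm_carrier) (use e2z in \<open>simp add: zvec_def\<close>)

lemma x2p_0: "x2p 0 = qone"
  by (simp add: x2p_def qX_sm qone_sm zero_fun_def)

lemma x2p_Suc: "x2p (Suc b) = qt_mult m L X2 (x2p b)"
proof -
  have z: "(\<lambda>k. int b * ebasis 2 k) \<in> zvec m" using e2z by (simp add: zvec_def)
  have "qt_mult m L X2 (x2p b) = sm (bil m L (ebasis 2) (\<lambda>k. int b * ebasis 2 k)) (ebasis 2 + (\<lambda>k. int b * ebasis 2 k))"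
    unfolding X2_def x2p_def qX_sm by (simp add: sm_mult[OF e2z z])
  also have "\<dots> = x2p (Suc b)"
    by (simp add: bil_scale_right bil_self x2p_def qX_sm plus_fun_def algebra_simps)
  finally show ?thesis by simp
qed

lemma x2p_supp: "x2p b (j, c) \<noteq> 0 \<Longrightarrow> c 2 = int b"
  by (auto simp: x2p_def qX_def ebasis_def split: if_splits)

lemma X2_supp: "X2 (j, c) \<noteq> 0 \<Longrightarrow> c = ebasis 2"
  by (auto simp: X2_def qX_def split: if_splits)

lemma X2_c2: "X2 (j, c) \<noteq> 0 \<Longrightarrow> c 2 = 1"
  using X2_supp[of j c] by (simp add: ebasis_def)

definition "ypow n = (qt_mult m L Yv ^^ n) qone"

lemma ypow_0: "ypow 0 = qone" by (simp add: ypow_def)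
lemma ypow_Suc: "ypow (Suc n) = qt_mult m L Yv (ypow n)" by (simp add: ypow_def)

lemma ypow_carrier: "ypow n \<in> qt_carrier m"
  by (induction n) (simp_all add: ypow_0 ypow_Suc qone_carrier qt_mult_closed Yv_carrier)

lemma Yv_c2: "Yv (j, c) \<noteq> 0 \<Longrightarrow> c 2 = -1"
  using Yv_supp wv_2 by blast

lemma ypow_supp: "ypow n (j, c) \<noteq> 0 \<Longrightarrow> c 2 = - int n"
proof (induction n arbitrary: j c)
  case 0
  then show ?case by (auto simp: ypow_0 qone_def split: if_splits)
next
  case (Suc n)
  have "c 2 = -1 + - int n"
    by (rule prod_coord[OF Yv_carrier ypow_carrier _ _ Suc.prems[unfolded ypow_Suc]])
      (use Yv_c2 Suc.IH in auto)
  then show ?case by simp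
qed

lemma X2Y_T0: "qt_mult m L X2 Yv \<in> T0" and YX2_T0: "qt_mult m L Yv X2 \<in> T0"
proof -
  have "\<forall>j c. qt_mult m L X2 Yv (j, c) \<noteq> 0 \<longrightarrow> c 2 = 0"
  proof (intro allI impI)
    fix j c assume nz: "qt_mult m L X2 Yv (j, c) \<noteq> 0"
    have "c 2 = 1 + -1"
      by (rule prod_coord[OF X_carrier(3) Yv_carrier _ _ nz]) (use X2_c2 Yv_c2 in auto)
    then show "c 2 = 0" by simp
  qed
  then show "qt_mult m L X2 Yv \<in> T0" using qt_mult_closed[OF X_carrier(3) Yv_carrier] by (simp add: T0_def)
  have "\<forall>j c. qt_mult m L Yv X2 (j, c) \<noteq> 0 \<longrightarrow> c 2 = 0"
  proof (intro allI impI)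
    fix j c assume nz: "qt_mult m L Yv X2 (j, c) \<noteq> 0"
    have "c 2 = -1 + 1"
      by (rule prod_coord[OF Yv_carrier X_carrier(3) _ _ nz]) (use X2_c2 Yv_c2 in auto)
    then show "c 2 = 0" by simp
  qed
  then show "qt_mult m L Yv X2 \<in> T0" using qt_mult_closed[OF Yv_carrier X_carrier(3)] by (simp add: T0_def)
qed

lemma X2_comm: "a \<in> T0 \<Longrightarrow> \<exists>a'\<in>T0. qt_mult m L X2 a = qt_mult m L a' X2"
proof -
  assume a: "a \<in> T0"
  define \<theta> where "\<theta> = (\<lambda>c. bil m L (ebasis 2) c - bil m L c (ebasis 2))"
  have "qt_mult m L X2 a = qt_mult m L (tw \<theta> a) X2"
  proof (rule comm_tw[OF X_carrier(3)])
    show "a \<in> qt_carrier m" using a by (simp add: T0_def)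
    fix p q assume "X2 p \<noteq> 0" "a q \<noteq> 0"
    then have "snd p = ebasis 2" using X2_supp by (metis prod.collapse)
    then show "bil m L (snd q) (snd p) + \<theta> (snd q) = bil m L (snd p) (snd q)" by (simp add: \<theta>_def)
  qed
  then show ?thesis using T0_tw[OF a] by blast
qed

lemma Yv_comm: "a \<in> T0 \<Longrightarrow> \<exists>a'\<in>T0. qt_mult m L Yv a = qt_mult m L a' Yv"
proof -
  assume a: "a \<in> T0"
  define \<theta> where "\<theta> = (\<lambda>c. bil m L w0 c - bil m L c w0)"
  have "qt_mult m L Yv a = qt_mult m L (tw \<theta> a) Yv"
  proof (rule comm_tw[OF Yv_carrier])
    show "a \<in> qt_carrier m" using a by (simp add: T0_def)
    fix p q assume p: "Yv p \<noteq> 0" and q: "a q \<noteq> 0"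
    obtain r where r: "r \<in> {0..d 2}" "snd p = wv r" using Yv_supp p by (metis prod.collapse)
    have q2: "snd q 2 = 0" using a q unfolding T0_def by (metis (mono_tags, lifting) mem_Collect_eq prod.collapse)
    have wr: "snd p = w0 + (\<lambda>k. int r * beta2 k)" using r wv_eq by simp
    have b1: "bil m L (snd q) (\<lambda>k. int r * beta2 k) = 0"
      by (simp add: bil_scale_right bil_beta_right[of "snd q", OF q2])
    have b2: "bil m L (\<lambda>k. int r * beta2 k) (snd q) = 0"
      by (simp add: bil_scale_left bil_beta_left[of "snd q", OF q2])
    show "bil m L (snd q) (snd p) + \<theta> (snd q) = bil m L (snd p) (snd q)"
      unfolding wr by (simp add: \<theta>_def bil_add_left bil_add_right b1 b2)
  qed
  then show ?thesis using T0_tw[OF a] by blast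
qed

end


inductive_set LZ :: "('a, 'b) ring_scheme \<Rightarrow> 'a set \<Rightarrow> 'a set" for R and H where
  lz_one: "\<one>\<^bsub>R\<^esub> \<in> LZ R H"
| lz_inv: "z \<in> LZ R H \<Longrightarrow> \<ominus>\<^bsub>R\<^esub> z \<in> LZ R H"
| lz_add: "z \<in> LZ R H \<Longrightarrow> z' \<in> LZ R H \<Longrightarrow> z \<oplus>\<^bsub>R\<^esub> z' \<in> LZ R H"
| lz_mul: "g \<in> H \<Longrightarrow> z \<in> LZ R H \<Longrightarrow> g \<otimes>\<^bsub>R\<^esub> z \<in> LZ R H"

lemma (in ring) LZ_carrier:
  assumes "H \<subseteq> carrier R" "z \<in> LZ R H" shows "z \<in> carrier R"
  using assms(2) by (induction rule: LZ.induct) (use assms(1) in auto)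

lemma (in ring) LZ_mult:
  assumes H: "H \<subseteq> carrier R" and z: "z \<in> LZ R H" and w: "w \<in> LZ R H"
  shows "z \<otimes> w \<in> LZ R H"
  using z
proof (induction rule: LZ.induct)
  case lz_one
  then show ?case using w LZ_carrier[OF H w] by simp
next
  case (lz_inv z)
  have "\<ominus> z \<otimes> w = \<ominus> (z \<otimes> w)"
    using LZ_carrier[OF H lz_inv.hyps] LZ_carrier[OF H w] by (simp add: l_minus)
  then show ?case using LZ.lz_inv[OF lz_inv.IH] by simp
next
  case (lz_add z z')
  have "(z \<oplus> z') \<otimes> w = z \<otimes> w \<oplus> z' \<otimes> w"
    using LZ_carrier[OF H lz_add.hyps(1)] LZ_carrier[OF H lz_add.hyps(2)] LZ_carrier[OF H w]
    by (simp add: l_distr)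
  then show ?case using LZ.lz_add[OF lz_add.IH] by simp
next
  case (lz_mul g z)
  have "(g \<otimes> z) \<otimes> w = g \<otimes> (z \<otimes> w)"
    using lz_mul.hyps(1) H LZ_carrier[OF H lz_mul.hyps(2)] LZ_carrier[OF H w]
    by (simp add: m_assoc subset_iff)
  then show ?case using LZ.lz_mul[OF lz_mul.hyps(1) lz_mul.IH] by simp
qed

lemma (in ring) gen_LZ:
  assumes H: "H \<subseteq> carrier R"
  shows "generate_ring R H \<subseteq> LZ R H"
proof
  fix f assume "f \<in> generate_ring R H"
  then show "f \<in> LZ R H"
  proof (induction rule: generate_ring.induct)
    case one then show ?case by (rule LZ.lz_one)
  next
    case (incl h)
    have "h = h \<otimes> \<one>" using incl H by auto
    then show ?case using LZ.lz_mul[OF incl LZ.lz_one[of R H]] by simp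
  next
    case (a_inv h) show ?case by (rule LZ.lz_inv[OF a_inv.IH])
  next
    case (eng_add h1 h2) show ?case by (rule LZ.lz_add[OF eng_add.IH])
  next
    case (eng_mult h1 h2) show ?case by (rule LZ_mult[OF H eng_mult.IH])
  qed
qed

lemma qt_mult_neg_r: "f \<in> qt_carrier m \<Longrightarrow> g \<in> qt_carrier m \<Longrightarrow>
    qt_mult m L f (\<lambda>p. - g p) = (\<lambda>p. - qt_mult m L f g p)"
proof -
  assume f: "f \<in> qt_carrier m" and g: "g \<in> qt_carrier m"
  interpret ring "quantum_torus m L" by (rule qt_ring)
  have "f \<otimes>\<^bsub>quantum_torus m L\<^esub> (\<ominus>\<^bsub>quantum_torus m L\<^esub> g) = \<ominus>\<^bsub>quantum_torus m L\<^esub> (f \<otimes>\<^bsub>quantum_torus m L\<^esub> g)"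
    by (rule r_minus) (simp_all add: f g)
  then show ?thesis using f g by (simp add: qt_a_inv qt_mult_closed)
qed

lemma qt_mult_neg_l: "f \<in> qt_carrier m \<Longrightarrow> g \<in> qt_carrier m \<Longrightarrow>
    qt_mult m L (\<lambda>p. - f p) g = (\<lambda>p. - qt_mult m L f g p)"
proof -
  assume f: "f \<in> qt_carrier m" and g: "g \<in> qt_carrier m"
  interpret ring "quantum_torus m L" by (rule qt_ring)
  have "(\<ominus>\<^bsub>quantum_torus m L\<^esub> f) \<otimes>\<^bsub>quantum_torus m L\<^esub> g = \<ominus>\<^bsub>quantum_torus m L\<^esub> (f \<otimes>\<^bsub>quantum_torus m L\<^esub> g)"
    by (rule l_minus) (simp_all add: f g)
  then show ?thesis using f g by (simp add: qt_a_inv qt_mult_closed)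
qed

context seed
begin

inductive_set Wset where
  W_x: "a \<in> T0 \<Longrightarrow> qt_mult m L a (x2p b) \<in> Wset"
| W_y: "a \<in> T0 \<Longrightarrow> qt_mult m L a (ypow (Suc k)) \<in> Wset"
| W_add: "u \<in> Wset \<Longrightarrow> v \<in> Wset \<Longrightarrow> (\<lambda>p. u p + v p) \<in> Wset"
| W_neg: "u \<in> Wset \<Longrightarrow> (\<lambda>p. - u p) \<in> Wset"

lemma T0_c: "a \<in> T0 \<Longrightarrow> a \<in> qt_carrier m" by (simp add: T0_def)

lemma W_carrier: "u \<in> Wset \<Longrightarrow> u \<in> qt_carrier m"
  by (induction rule: Wset.induct)
    (auto simp: qt_mult_closed T0_c x2p_carrier ypow_carrier add_carrier neg_carrier)

lemma Yv_qone: "qt_mult m L Yv qone = ypow (Suc 0)"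
  by (simp add: ypow_Suc ypow_0)

lemma left_T0:
  assumes g: "g \<in> T0" and w: "w \<in> Wset"
  shows "qt_mult m L g w \<in> Wset"
  using w
proof (induction rule: Wset.induct)
  case (W_x a b)
  have "qt_mult m L g (qt_mult m L a (x2p b)) = qt_mult m L (qt_mult m L g a) (x2p b)"
    by (rule qt_assoc[symmetric]) (use g W_x in \<open>simp_all add: T0_c x2p_carrier\<close>)
  then show ?case using Wset.W_x[OF T0_mult[OF g W_x]] by simp
next
  case (W_y a k)
  have "qt_mult m L g (qt_mult m L a (ypow (Suc k))) = qt_mult m L (qt_mult m L g a) (ypow (Suc k))"
    by (rule qt_assoc[symmetric]) (use g W_y in \<open>simp_all add: T0_c ypow_carrier\<close>)
  then show ?case using Wset.W_y[OF T0_mult[OF g W_y]] by simp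
next
  case (W_add u v)
  have "qt_mult m L g (\<lambda>p. u p + v p) = (\<lambda>p. qt_mult m L g u p + qt_mult m L g v p)"
    by (rule qt_distr_r) (use g W_add.hyps in \<open>simp_all add: T0_c W_carrier\<close>)
  then show ?case using Wset.W_add[OF W_add.IH] by simp
next
  case (W_neg u)
  have "qt_mult m L g (\<lambda>p. - u p) = (\<lambda>p. - qt_mult m L g u p)"
    by (rule qt_mult_neg_r) (use g W_neg.hyps in \<open>simp_all add: T0_c W_carrier\<close>)
  then show ?case using Wset.W_neg[OF W_neg.IH] by simp
qed

lemma left_gen:
  assumes c: "g \<in> qt_carrier m" and w: "w \<in> Wset"
    and atom_x: "\<And>a b. a \<in> T0 \<Longrightarrow> qt_mult m L g (qt_mult m L a (x2p b)) \<in> Wset"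
    and atom_y: "\<And>a k. a \<in> T0 \<Longrightarrow> qt_mult m L g (qt_mult m L a (ypow (Suc k))) \<in> Wset"
  shows "qt_mult m L g w \<in> Wset"
  using w
proof (induction rule: Wset.induct)
  case (W_x a b) then show ?case by (rule atom_x)
next
  case (W_y a k) then show ?case by (rule atom_y)
next
  case (W_add u v)
  have "qt_mult m L g (\<lambda>p. u p + v p) = (\<lambda>p. qt_mult m L g u p + qt_mult m L g v p)"
    by (rule qt_distr_r) (use c W_add.hyps in \<open>simp_all add: W_carrier\<close>)
  then show ?case using Wset.W_add[OF W_add.IH] by simp
next
  case (W_neg u)
  have "qt_mult m L g (\<lambda>p. - u p) = (\<lambda>p. - qt_mult m L g u p)"
    by (rule qt_mult_neg_r) (use c W_neg.hyps in \<open>simp_all add: W_carrier\<close>)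
  then show ?case using Wset.W_neg[OF W_neg.IH] by simp
qed

lemma X2c: "X2 \<in> qt_carrier m" by (rule X_carrier(3))

lemma left_X2: "w \<in> Wset \<Longrightarrow> qt_mult m L X2 w \<in> Wset"
proof (rule left_gen[OF X2c])
  fix a b assume a: "a \<in> T0"
  obtain a' where a': "a' \<in> T0" "qt_mult m L X2 a = qt_mult m L a' X2" using X2_comm[OF a] by blast
  have ac: "a \<in> qt_carrier m" "a' \<in> qt_carrier m" using a a'(1) by (simp_all add: T0_c)
  have "qt_mult m L X2 (qt_mult m L a (x2p b)) = qt_mult m L (qt_mult m L X2 a) (x2p b)"
    by (rule qt_assoc[symmetric]) (simp_all add: X2c ac x2p_carrier)
  also have "\<dots> = qt_mult m L (qt_mult m L a' X2) (x2p b)" using a'(2) by simp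
  also have "\<dots> = qt_mult m L a' (qt_mult m L X2 (x2p b))"
    by (rule qt_assoc) (simp_all add: X2c ac x2p_carrier)
  also have "\<dots> = qt_mult m L a' (x2p (Suc b))" by (simp add: x2p_Suc)
  finally show "qt_mult m L X2 (qt_mult m L a (x2p b)) \<in> Wset" using Wset.W_x[OF a'(1)] by simp
next
  fix a k assume a: "a \<in> T0"
  obtain a' where a': "a' \<in> T0" "qt_mult m L X2 a = qt_mult m L a' X2" using X2_comm[OF a] by blast
  have ac: "a \<in> qt_carrier m" "a' \<in> qt_carrier m" using a a'(1) by (simp_all add: T0_c)
  have "qt_mult m L X2 (qt_mult m L a (ypow (Suc k))) = qt_mult m L (qt_mult m L X2 a) (ypow (Suc k))"
    by (rule qt_assoc[symmetric]) (simp_all add: X2c ac ypow_carrier)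
  also have "\<dots> = qt_mult m L (qt_mult m L a' X2) (ypow (Suc k))" using a'(2) by simp
  also have "\<dots> = qt_mult m L a' (qt_mult m L X2 (ypow (Suc k)))"
    by (rule qt_assoc) (simp_all add: X2c ac ypow_carrier)
  also have "\<dots> = qt_mult m L a' (qt_mult m L X2 (qt_mult m L Yv (ypow k)))"
    by (simp add: ypow_Suc)
  also have "\<dots> = qt_mult m L a' (qt_mult m L (qt_mult m L X2 Yv) (ypow k))"
    by (simp add: qt_assoc X2c Yv_carrier ypow_carrier)
  also have "\<dots> = qt_mult m L (qt_mult m L a' (qt_mult m L X2 Yv)) (ypow k)"
    by (rule qt_assoc[symmetric]) (simp_all add: X2c ac ypow_carrier Yv_carrier qt_mult_closed)
  finally have eq: "qt_mult m L X2 (qt_mult m L a (ypow (Suc k))) = qt_mult m L (qt_mult m L a' (qt_mult m L X2 Yv)) (ypow k)" .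
  have aa: "qt_mult m L a' (qt_mult m L X2 Yv) \<in> T0" by (rule T0_mult[OF a'(1) X2Y_T0])
  show "qt_mult m L X2 (qt_mult m L a (ypow (Suc k))) \<in> Wset"
  proof (cases k)
    case 0
    then have "ypow k = x2p 0" by (simp add: ypow_0 x2p_0)
    then show ?thesis unfolding eq using Wset.W_x[OF aa, of 0] by simp
  next
    case (Suc k')
    then show ?thesis unfolding eq using Wset.W_y[OF aa, of k'] by simp
  qed
qed

lemma left_Yv: "w \<in> Wset \<Longrightarrow> qt_mult m L Yv w \<in> Wset"
proof (rule left_gen[OF Yv_carrier])
  fix a b assume a: "a \<in> T0"
  obtain a' where a': "a' \<in> T0" "qt_mult m L Yv a = qt_mult m L a' Yv" using Yv_comm[OF a] by blast
  have ac: "a \<in> qt_carrier m" "a' \<in> qt_carrier m" using a a'(1) by (simp_all add: T0_c)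
  have "qt_mult m L Yv (qt_mult m L a (x2p b)) = qt_mult m L (qt_mult m L Yv a) (x2p b)"
    by (rule qt_assoc[symmetric]) (simp_all add: Yv_carrier ac x2p_carrier)
  also have "\<dots> = qt_mult m L (qt_mult m L a' Yv) (x2p b)" using a'(2) by simp
  also have "\<dots> = qt_mult m L a' (qt_mult m L Yv (x2p b))"
    by (rule qt_assoc) (simp_all add: Yv_carrier ac x2p_carrier)
  finally have eq: "qt_mult m L Yv (qt_mult m L a (x2p b)) = qt_mult m L a' (qt_mult m L Yv (x2p b))" .
  show "qt_mult m L Yv (qt_mult m L a (x2p b)) \<in> Wset"
  proof (cases b)
    case 0
    then have "qt_mult m L Yv (x2p b) = ypow (Suc 0)" by (simp add: x2p_0 Yv_qone)
    then show ?thesis unfolding eq using Wset.W_y[OF a'(1), of 0] by simp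
  next
    case (Suc b')
    have "qt_mult m L a' (qt_mult m L Yv (x2p b)) = qt_mult m L a' (qt_mult m L Yv (qt_mult m L X2 (x2p b')))"
      by (simp add: Suc x2p_Suc)
    also have "\<dots> = qt_mult m L a' (qt_mult m L (qt_mult m L Yv X2) (x2p b'))"
      by (simp add: qt_assoc X2c Yv_carrier x2p_carrier)
    also have "\<dots> = qt_mult m L (qt_mult m L a' (qt_mult m L Yv X2)) (x2p b')"
      by (rule qt_assoc[symmetric]) (simp_all add: X2c ac x2p_carrier Yv_carrier qt_mult_closed)
    finally show ?thesis unfolding eq using Wset.W_x[OF T0_mult[OF a'(1) YX2_T0], of b'] by simp
  qed
next
  fix a k assume a: "a \<in> T0"
  obtain a' where a': "a' \<in> T0" "qt_mult m L Yv a = qt_mult m L a' Yv" using Yv_comm[OF a] by blast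
  have ac: "a \<in> qt_carrier m" "a' \<in> qt_carrier m" using a a'(1) by (simp_all add: T0_c)
  have "qt_mult m L Yv (qt_mult m L a (ypow (Suc k))) = qt_mult m L (qt_mult m L Yv a) (ypow (Suc k))"
    by (rule qt_assoc[symmetric]) (simp_all add: Yv_carrier ac ypow_carrier)
  also have "\<dots> = qt_mult m L (qt_mult m L a' Yv) (ypow (Suc k))" using a'(2) by simp
  also have "\<dots> = qt_mult m L a' (qt_mult m L Yv (ypow (Suc k)))"
    by (rule qt_assoc) (simp_all add: Yv_carrier ac ypow_carrier)
  also have "\<dots> = qt_mult m L a' (ypow (Suc (Suc k)))" by (simp add: ypow_Suc)
  finally show "qt_mult m L Yv (qt_mult m L a (ypow (Suc k))) \<in> Wset" using Wset.W_y[OF a'(1)] by simp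
qed

lemma HB_cases: "g \<in> HB \<Longrightarrow> g \<in> T0 \<or> g = X2 \<or> g = Yv"
  using ZP_T0 X1_T0 X1i_T0 unfolding HB_def by blast

lemma GB_W: "generate_ring QT HB \<subseteq> Wset"
proof -
  interpret ring QT by (rule qt_ring)
  have "LZ QT HB \<subseteq> Wset"
  proof
    fix z assume "z \<in> LZ QT HB"
    then show "z \<in> Wset"
    proof (induction rule: LZ.induct)
      case lz_one
      have "qt_mult m L qone (x2p 0) = qone" by (simp add: x2p_0 qt_l_one qone_carrier)
      then show ?case using Wset.W_x[OF T0_qone, of 0] by simp
    next
      case (lz_inv z)
      have "z \<in> qt_carrier m" using LZ_carrier[OF _ lz_inv.hyps] HB_c by simp
      then show ?case using Wset.W_neg[OF lz_inv.IH] by (simp add: qt_a_inv)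
    next
      case (lz_add z z')
      then show ?case using Wset.W_add[OF lz_add.IH] by simp
    next
      case (lz_mul g z)
      from HB_cases[OF lz_mul.hyps(1)] show ?case
      proof (elim disjE)
        assume "g \<in> T0" then show ?thesis using left_T0[OF _ lz_mul.IH] by simp
      next
        assume "g = X2" then show ?thesis using left_X2[OF lz_mul.IH] by simp
      next
        assume "g = Yv" then show ?thesis using left_Yv[OF lz_mul.IH] by simp
      qed
    qed
  qed
  have hb: "HB \<subseteq> carrier QT" using HB_c by simp
  show ?thesis using gen_LZ[OF hb] \<open>LZ QT HB \<subseteq> Wset\<close> by blast
qed

end


definition comp2 :: "int \<Rightarrow> ((int \<times> (nat \<Rightarrow> int)) \<Rightarrow> int) \<Rightarrow> ((int \<times> (nat \<Rightarrow> int)) \<Rightarrow> int)" where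
  "comp2 b f = (\<lambda>(j, c). if c 2 = b then f (j, c) else 0)"

lemma comp2_apply[simp]: "comp2 b f (j, c) = (if c 2 = b then f (j, c) else 0)"
  by (simp add: comp2_def)

lemma comp2_carrier: "f \<in> qt_carrier m \<Longrightarrow> comp2 b f \<in> qt_carrier m"
proof -
  assume f: "f \<in> qt_carrier m"
  have "supp (comp2 b f) \<subseteq> supp f" by (auto simp: supp_def comp2_def split: if_splits)
  then have "finite (supp (comp2 b f))" using carrier_finite[OF f] finite_subset by blast
  then show ?thesis using f by (auto simp: qt_carrier_def supp_def split: if_splits)
qed

lemma comp2_same: assumes "\<And>j c. f (j, c) \<noteq> 0 \<Longrightarrow> c 2 = s" shows "comp2 s f = f"
proof (rule ext, clarify)
  fix j c show "comp2 s f (j, c) = f (j, c)" using assms[of j c] by auto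
qed

lemma comp2_other: assumes "\<And>j c. f (j, c) \<noteq> 0 \<Longrightarrow> c 2 = s" "t \<noteq> s" shows "comp2 t f = (\<lambda>_. 0)"
proof (rule ext, clarify)
  fix j c show "comp2 t f (j, c) = 0" using assms(1)[of j c] assms(2) by auto
qed

lemma qt_mult_zero_l: "f \<in> qt_carrier m \<Longrightarrow> qt_mult m L (\<lambda>_. 0) f = (\<lambda>_. 0)"
proof -
  assume f: "f \<in> qt_carrier m"
  interpret ring "quantum_torus m L" by (rule qt_ring)
  have "\<zero>\<^bsub>quantum_torus m L\<^esub> \<otimes>\<^bsub>quantum_torus m L\<^esub> f = \<zero>\<^bsub>quantum_torus m L\<^esub>"
    by (rule l_null) (simp add: f)
  then show ?thesis by simp
qed

context seed
begin

lemma W_comp: "u \<in> Wset \<Longrightarrow> \<exists>a\<in>T0. comp2 (- int (Suc k)) u = qt_mult m L a (ypow (Suc k))"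
proof (induction rule: Wset.induct)
  case (W_x a b)
  have "comp2 (- int (Suc k)) (qt_mult m L a (x2p b)) = (\<lambda>_. 0)"
  proof (rule comp2_other)
    fix j c assume nz: "qt_mult m L a (x2p b) (j, c) \<noteq> 0"
    show "c 2 = 0 + int b"
      by (rule prod_coord[OF T0_c[OF W_x] x2p_carrier _ _ nz]) (use W_x x2p_supp in \<open>auto simp: T0_def\<close>)
  qed simp
  then show ?case using qt_mult_zero_l[OF ypow_carrier] T0_zero by metis
next
  case (W_y a k')
  have sup: "\<And>j c. qt_mult m L a (ypow (Suc k')) (j, c) \<noteq> 0 \<Longrightarrow> c 2 = - int (Suc k')"
  proof -
    fix j c assume nz: "qt_mult m L a (ypow (Suc k')) (j, c) \<noteq> 0"
    have "c 2 = 0 + - int (Suc k')"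
      by (rule prod_coord[OF T0_c[OF W_y] ypow_carrier _ ypow_supp nz]) (use W_y in \<open>auto simp: T0_def\<close>)
    then show "c 2 = - int (Suc k')" by simp
  qed
  show ?case
  proof (cases "k = k'")
    case True
    have "comp2 (- int (Suc k')) (qt_mult m L a (ypow (Suc k'))) = qt_mult m L a (ypow (Suc k'))"
      by (intro comp2_same sup)
    then show ?thesis using W_y True by blast
  next
    case False
    have "comp2 (- int (Suc k)) (qt_mult m L a (ypow (Suc k'))) = (\<lambda>_. 0)"
    proof (rule comp2_other)
      fix j c assume "qt_mult m L a (ypow (Suc k')) (j, c) \<noteq> 0"
      then show "c 2 = - int (Suc k')" by (rule sup)
    next
      show "- int (Suc k) \<noteq> - int (Suc k')" using False by simp
    qed
    then show ?thesis using qt_mult_zero_l[OF ypow_carrier] T0_zero by metis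
  qed
next
  case (W_add u v)
  obtain a where a: "a \<in> T0" "comp2 (- int (Suc k)) u = qt_mult m L a (ypow (Suc k))" using W_add.IH by blast
  obtain b where b: "b \<in> T0" "comp2 (- int (Suc k)) v = qt_mult m L b (ypow (Suc k))" using W_add.IH by blast
  have "comp2 (- int (Suc k)) (\<lambda>p. u p + v p) = (\<lambda>p. comp2 (- int (Suc k)) u p + comp2 (- int (Suc k)) v p)"
    by (rule ext) (auto simp: comp2_def)
  also have "\<dots> = qt_mult m L (\<lambda>p. a p + b p) (ypow (Suc k))"
    unfolding a(2) b(2) by (rule qt_distr_l[symmetric]) (simp_all add: T0_c a b ypow_carrier)
  finally show ?case using T0_add[OF a(1) b(1)] by blast
next
  case (W_neg u)
  obtain a where a: "a \<in> T0" "comp2 (- int (Suc k)) u = qt_mult m L a (ypow (Suc k))" using W_neg.IH by blast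
  have "comp2 (- int (Suc k)) (\<lambda>p. - u p) = (\<lambda>p. - comp2 (- int (Suc k)) u p)"
    by (rule ext) (auto simp: comp2_def)
  also have "\<dots> = qt_mult m L (\<lambda>p. - a p) (ypow (Suc k))"
    unfolding a(2) by (rule qt_mult_neg_l[symmetric]) (simp_all add: T0_c a ypow_carrier)
  finally show ?case using T0_neg[OF a(1)] by blast
qed

definition UM :: "nat \<Rightarrow> ((int \<times> (nat \<Rightarrow> int)) \<Rightarrow> int) \<Rightarrow> (nat \<Rightarrow> int) \<Rightarrow> int \<Rightarrow> bool" where
  "UM i g c0 j0 \<longleftrightarrow> g \<in> qt_carrier m \<and> g (j0, c0) = 1 \<and> (\<forall>j. j \<noteq> j0 \<longrightarrow> g (j, c0) = 0) \<and>
     (\<forall>j c. g (j, c) \<noteq> 0 \<longrightarrow> c0 i \<le> c i \<and> (c i = c0 i \<longrightarrow> c = c0))"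

lemma L_min:
  assumes U: "UM i g cg jg" and f: "f \<in> qt_carrier m"
    and fmin: "\<And>j' c'. f (j', c') \<noteq> 0 \<Longrightarrow> c i \<le> c' i"
  shows "qt_mult m L f g (j, c + cg) = f (j - jg - bil m L c cg, c)"
proof -
  define p0 where "p0 = (j - jg - bil m L c cg, c)"
  define q0 where "q0 = (jg, cg)"
  have gc: "g \<in> qt_carrier m" using U by (simp add: UM_def)
  have ff: "finite (supp f)" "finite (supp g)" using carrier_finite f gc by auto
  have gq0: "g q0 = 1" using U by (simp add: UM_def q0_def)
  have "qt_mult m L f g (j, c + cg) = (\<Sum>p\<in>supp f. \<Sum>q\<in>supp g. if star m L p q = (j, c + cg) then f p * g q else 0)"
    by (rule qt_mult_conv) (use ff in auto)
  also have "\<dots> = (\<Sum>p\<in>supp f. \<Sum>q\<in>supp g. if p = p0 then (if q = q0 then f p0 else 0) else 0)"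
  proof (intro sum.cong refl)
    fix p q assume p: "p \<in> supp f" and q: "q \<in> supp g"
    obtain jp cp where pp: "p = (jp, cp)" by fastforce
    obtain jq cq where qq: "q = (jq, cq)" by fastforce
    have fp: "f (jp, cp) \<noteq> 0" using p by (simp add: supp_def pp)
    have gq: "g (jq, cq) \<noteq> 0" using q by (simp add: supp_def qq)
    show "(if star m L p q = (j, c + cg) then f p * g q else 0) = (if p = p0 then (if q = q0 then f p0 else 0) else 0)"
    proof (cases "star m L p q = (j, c + cg)")
      case True
      then have e1: "cp + cq = c + cg" and e2: "jp + jq + bil m L cp cq = j" by (auto simp: star_def pp qq)
      have i1: "c i \<le> cp i" using fmin[OF fp] .
      have i2: "cg i \<le> cq i" using U gq by (auto simp: UM_def)
      have "cp i + cq i = c i + cg i" using fun_cong[OF e1, of i] by simp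
      then have "cq i = cg i" using i1 i2 by simp
      then have cq: "cq = cg" using U gq by (auto simp: UM_def)
      then have cp: "cp = c" using e1 by (metis add_right_cancel)
      have jq: "jq = jg" using U gq cq by (auto simp: UM_def)
      have "q = q0" by (simp add: qq q0_def cq jq)
      moreover have "p = p0" using e2 by (simp add: pp p0_def cp cq jq algebra_simps)
      ultimately show ?thesis using True gq0 by simp
    next
      case False
      have "\<not> (p = p0 \<and> q = q0)"
      proof
        assume "p = p0 \<and> q = q0"
        then have "star m L p q = (j, c + cg)" by (simp add: p0_def q0_def star_def)
        then show False using False by simp
      qed
      then show ?thesis using False by auto
    qed
  qed
  also have "\<dots> = (\<Sum>p\<in>supp f. if p = p0 then f p0 else 0)"
  proof (rule sum.cong[OF refl])
    fix p
    have "q0 \<in> supp g" using gq0 by (simp add: supp_def)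
    then show "(\<Sum>q\<in>supp g. if p = p0 then (if q = q0 then f p0 else 0) else 0) = (if p = p0 then f p0 else 0)"
      using ff(2) by (cases "p = p0") (simp_all add: sum.delta')
  qed
  also have "\<dots> = f p0" using ff(1) by (simp add: sum.delta' supp_def)
  finally show ?thesis by (simp add: p0_def)
qed

lemma UM_prod:
  assumes Uf: "UM i f cf jf" and Ug: "UM i g cg jg"
  shows "UM i (qt_mult m L f g) (cf + cg) (jf + jg + bil m L cf cg)"
proof -
  have fc: "f \<in> qt_carrier m" and gc: "g \<in> qt_carrier m" using Uf Ug by (auto simp: UM_def)
  have fmin: "\<And>j' c'. f (j', c') \<noteq> 0 \<Longrightarrow> cf i \<le> c' i" using Uf by (auto simp: UM_def)
  have val: "\<And>j. qt_mult m L f g (j, cf + cg) = f (j - jg - bil m L cf cg, cf)"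
    by (rule L_min[OF Ug fc]) (rule fmin)
  have v1: "qt_mult m L f g (jf + jg + bil m L cf cg, cf + cg) = 1"
    using Uf by (simp add: val UM_def)
  have v2: "\<forall>j. j \<noteq> jf + jg + bil m L cf cg \<longrightarrow> qt_mult m L f g (j, cf + cg) = 0"
  proof (intro allI impI)
    fix j assume "j \<noteq> jf + jg + bil m L cf cg"
    then have "j - jg - bil m L cf cg \<noteq> jf" by simp
    then show "qt_mult m L f g (j, cf + cg) = 0" using Uf by (simp add: val UM_def)
  qed
  have v3: "\<forall>j c. qt_mult m L f g (j, c) \<noteq> 0 \<longrightarrow> (cf + cg) i \<le> c i \<and> (c i = (cf + cg) i \<longrightarrow> c = cf + cg)"
  proof (intro allI impI)
    fix j c assume nz: "qt_mult m L f g (j, c) \<noteq> 0"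
    obtain p q where pq: "f p \<noteq> 0" "g q \<noteq> 0" "star m L p q = (j, c)"
      using qt_mult_supp[OF fc gc nz] by blast
    obtain jp cp where pp: "p = (jp, cp)" by fastforce
    obtain jq cq where qq: "q = (jq, cq)" by fastforce
    have c: "c = cp + cq" using pq(3) by (auto simp: star_def pp qq)
    have a1: "cf i \<le> cp i \<and> (cp i = cf i \<longrightarrow> cp = cf)" using Uf pq(1) by (auto simp: UM_def pp)
    have a2: "cg i \<le> cq i \<and> (cq i = cg i \<longrightarrow> cq = cg)" using Ug pq(2) by (auto simp: UM_def qq)
    show "(cf + cg) i \<le> c i \<and> (c i = (cf + cg) i \<longrightarrow> c = cf + cg)"
      using a1 a2 by (auto simp: c)
  qed
  show ?thesis using qt_mult_closed[OF fc gc] v1 v2 v3 by (simp add: UM_def)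
qed

lemma UM_qone: "UM i qone 0 0"
  using qone_carrier by (auto simp: UM_def qone_def zero_fun_def[symmetric] split: if_splits)

lemma Yv_UM_pos: "beta2 i > 0 \<Longrightarrow> UM i Yv (wv 0) 0"
proof -
  assume b: "beta2 i > 0"
  have v: "\<forall>j. Yv (j, wv 0) = (if j = 0 then 1 else 0)" using Yv_at[of 0] h0 by simp
  have s: "\<forall>j c. Yv (j, c) \<noteq> 0 \<longrightarrow> wv 0 i \<le> c i \<and> (c i = wv 0 i \<longrightarrow> c = wv 0)"
  proof (intro allI impI)
    fix j c assume "Yv (j, c) \<noteq> 0"
    from Yv_supp[OF this] obtain r where "r \<in> {0..d 2}" "c = wv r" by blast
    then have r: "r \<le> d 2" "c = wv r" by auto
    have ci: "c i = w0 i + int r * beta2 i" using wv_eq[OF r(1)] r(2) by simp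
    have w0i: "wv 0 i = w0 i" using wv_eq[of 0] by simp
    have "0 \<le> int r * beta2 i" using b by simp
    moreover have "int r * beta2 i = 0 \<Longrightarrow> r = 0" using b by simp
    ultimately show "wv 0 i \<le> c i \<and> (c i = wv 0 i \<longrightarrow> c = wv 0)" using ci w0i r(2) by auto
  qed
  show ?thesis using Yv_carrier v s by (simp add: UM_def)
qed

lemma Yv_UM_neg: "beta2 i < 0 \<Longrightarrow> UM i Yv (wv (d 2)) 0"
proof -
  assume b: "beta2 i < 0"
  have v: "\<forall>j. Yv (j, wv (d 2)) = (if j = 0 then 1 else 0)" using Yv_at[of "d 2"] hd by simp
  have s: "\<forall>j c. Yv (j, c) \<noteq> 0 \<longrightarrow> wv (d 2) i \<le> c i \<and> (c i = wv (d 2) i \<longrightarrow> c = wv (d 2))"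
  proof (intro allI impI)
    fix j c assume "Yv (j, c) \<noteq> 0"
    from Yv_supp[OF this] obtain r where "r \<in> {0..d 2}" "c = wv r" by blast
    then have r: "r \<le> d 2" "c = wv r" by auto
    have ci: "c i = w0 i + int r * beta2 i" using wv_eq[OF r(1)] r(2) by simp
    have wdi: "wv (d 2) i = w0 i + int (d 2) * beta2 i" using wv_eq[of "d 2"] by simp
    have "int (d 2) * beta2 i \<le> int r * beta2 i" using b r(1) by (simp add: mult_right_mono_neg)
    moreover have "int r * beta2 i = int (d 2) * beta2 i \<Longrightarrow> r = d 2" using b by simp
    ultimately show "wv (d 2) i \<le> c i \<and> (c i = wv (d 2) i \<longrightarrow> c = wv (d 2))" using ci wdi r(2) by auto
  qed
  show ?thesis using Yv_carrier v s by (simp add: UM_def)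
qed

lemma ypow_UM:
  assumes U: "UM i Yv cY 0"
  shows "\<exists>jn. UM i (ypow n) (\<lambda>k. int n * cY k) jn"
proof (induction n)
  case 0
  have "(\<lambda>k. int 0 * cY k) = 0" by (simp add: zero_fun_def)
  then show ?case using UM_qone by (auto simp: ypow_0)
next
  case (Suc n)
  then obtain jn where jn: "UM i (ypow n) (\<lambda>k. int n * cY k) jn" by blast
  have "UM i (qt_mult m L Yv (ypow n)) (cY + (\<lambda>k. int n * cY k)) (0 + jn + bil m L cY (\<lambda>k. int n * cY k))"
    by (rule UM_prod[OF U jn])
  moreover have "cY + (\<lambda>k. int n * cY k) = (\<lambda>k. int (Suc n) * cY k)"
    by (simp add: plus_fun_def algebra_simps)
  ultimately show ?case by (auto simp: ypow_Suc)
qed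

end


lemma ex_min_int:
  fixes F :: "'a \<Rightarrow> int"
  assumes "finite S" "S \<noteq> {}"
  shows "\<exists>p\<in>S. \<forall>q\<in>S. F p \<le> F q"
proof -
  have "Min (F ` S) \<in> F ` S" using assms by simp
  then obtain p where p: "p \<in> S" "F p = Min (F ` S)" by auto
  have "\<forall>q\<in>S. F p \<le> F q" using assms p(2) by simp
  then show ?thesis using p(1) by blast
qed

definition comp1 :: "int \<Rightarrow> ((int \<times> (nat \<Rightarrow> int)) \<Rightarrow> int) \<Rightarrow> ((int \<times> (nat \<Rightarrow> int)) \<Rightarrow> int)" where
  "comp1 b f = (\<lambda>(j, c). if c 1 = b then f (j, c) else 0)"

lemma comp1_apply[simp]: "comp1 b f (j, c) = (if c 1 = b then f (j, c) else 0)"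
  by (simp add: comp1_def)

lemma comp1_carrier: "f \<in> qt_carrier m \<Longrightarrow> comp1 b f \<in> qt_carrier m"
proof -
  assume f: "f \<in> qt_carrier m"
  have "supp (comp1 b f) \<subseteq> supp f" by (auto simp: supp_def comp1_def split: if_splits)
  then have "finite (supp (comp1 b f))" using carrier_finite[OF f] finite_subset by blast
  then show ?thesis using f by (auto simp: qt_carrier_def supp_def split: if_splits)
qed

context seed
begin

lemma wv0_1: "beta2 1 \<ge> 0 \<Longrightarrow> wv 0 1 = 0"
  by (simp add: wv_def posp_def ebasis_def)

lemma wvd_1: "beta2 1 \<le> 0 \<Longrightarrow> wv (d 2) 1 = 0"
  by (simp add: wv_def posp_def ebasis_def)

lemma wv_1_zero: "beta2 1 = 0 \<Longrightarrow> wv r 1 = 0"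
  by (simp add: wv_def posp_def ebasis_def)

lemma ypow_c1: assumes b: "beta2 1 = 0" shows "ypow n (j, c) \<noteq> 0 \<Longrightarrow> c 1 = 0"
proof (induction n arbitrary: j c)
  case 0
  then show ?case by (auto simp: ypow_0 qone_def split: if_splits)
next
  case (Suc n)
  have Y1: "\<And>j c. Yv (j, c) \<noteq> 0 \<Longrightarrow> c 1 = 0"
  proof -
    fix j c assume "Yv (j, c) \<noteq> 0"
    from Yv_supp[OF this] obtain r where "c = wv r" by blast
    then show "c 1 = 0" using wv_1_zero[OF b] by simp
  qed
  have "c 1 = 0 + 0"
    by (rule prod_coord[OF Yv_carrier ypow_carrier _ _ Suc.prems[unfolded ypow_Suc]])
      (use Y1 Suc.IH in auto)
  then show ?case by simp
qed

lemma Yv_UM_ex: "beta2 i \<noteq> 0 \<Longrightarrow> \<exists>cY. UM i Yv cY 0 \<and> (cY = wv 0 \<and> beta2 i > 0 \<or> cY = wv (d 2) \<and> beta2 i < 0)"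
  using Yv_UM_pos Yv_UM_neg by (metis linorder_neqE)

lemma lex:
  assumes a: "a \<in> qt_carrier m"
    and pos: "\<And>j c. qt_mult m L a (ypow n) (j, c) \<noteq> 0 \<Longrightarrow> c 1 \<ge> 0"
    and nz: "a (j0, c0) \<noteq> 0"
  shows "c0 1 \<ge> 0"
proof (rule ccontr)
  assume neg: "\<not> c0 1 \<ge> 0"
  have fS: "finite (supp a)" using carrier_finite[OF a] .
  have neS: "supp a \<noteq> {}" using nz by (auto simp: supp_def)
  obtain p where p: "p \<in> supp a" and pmin: "\<forall>q\<in>supp a. snd p 1 \<le> snd q 1"
    using ex_min_int[OF fS neS, of "\<lambda>p. snd p 1"] by blast
  define \<mu> where "\<mu> = snd p 1"
  have \<mu>min: "\<And>j c. a (j, c) \<noteq> 0 \<Longrightarrow> \<mu> \<le> c 1"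
    using pmin by (force simp: \<mu>_def supp_def)
  have \<mu>neg: "\<mu> < 0" using \<mu>min[OF nz] neg by simp
  show False
  proof (cases "beta2 1 = 0")
    case False
    obtain cY where U: "UM 1 Yv cY 0" and cY: "cY = wv 0 \<and> beta2 1 > 0 \<or> cY = wv (d 2) \<and> beta2 1 < 0"
      using Yv_UM_ex[OF False] by blast
    have cY1: "cY 1 = 0" using cY wv0_1 wvd_1 by auto
    obtain jn where Un: "UM 1 (ypow n) (\<lambda>k. int n * cY k) jn" using ypow_UM[OF U] by blast
    obtain jp cp where pp: "p = (jp, cp)" by fastforce
    have "qt_mult m L a (ypow n) (jp + jn + bil m L cp (\<lambda>k. int n * cY k), cp + (\<lambda>k. int n * cY k))
        = a (jp + jn + bil m L cp (\<lambda>k. int n * cY k) - jn - bil m L cp (\<lambda>k. int n * cY k), cp)"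
      by (rule L_min[OF Un a]) (use \<mu>min in \<open>simp add: \<mu>_def pp\<close>)
    also have "\<dots> = a p" by (simp add: pp)
    finally have "qt_mult m L a (ypow n) (jp + jn + bil m L cp (\<lambda>k. int n * cY k), cp + (\<lambda>k. int n * cY k)) \<noteq> 0"
      using p by (simp add: supp_def)
    then have "(cp + (\<lambda>k. int n * cY k)) 1 \<ge> 0" by (rule pos)
    then show False using cY1 \<mu>neg by (simp add: \<mu>_def pp)
  next
    case True
    obtain i where i: "i \<in> {1..m}" "beta2 i \<noteq> 0" using beta_nz by blast
    obtain cY where U: "UM i Yv cY 0" using Yv_UM_ex[OF i(2)] by blast
    obtain jn where Un: "UM i (ypow n) (\<lambda>k. int n * cY k) jn" using ypow_UM[OF U] by blast
    define cn where "cn = (\<lambda>k. int n * cY k)"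
    have cn1: "cn 1 = 0" using Un ypow_c1[OF True, of n jn cn] by (simp add: UM_def cn_def)
    define a\<mu> where "a\<mu> = comp1 \<mu> a"
    have amc: "a\<mu> \<in> qt_carrier m" using comp1_carrier[OF a] by (simp add: a\<mu>_def)
    have fS2: "finite (supp a\<mu>)" using carrier_finite[OF amc] .
    obtain jp cp where pp: "p = (jp, cp)" by fastforce
    have "a\<mu> p \<noteq> 0" using p by (simp add: a\<mu>_def \<mu>_def supp_def pp)
    then have neS2: "supp a\<mu> \<noteq> {}" unfolding supp_def by blast
    obtain q where q: "q \<in> supp a\<mu>" and qmin: "\<forall>q'\<in>supp a\<mu>. snd q i \<le> snd q' i"
      using ex_min_int[OF fS2 neS2, of "\<lambda>p. snd p i"] by blast
    obtain jq cq where qq: "q = (jq, cq)" by fastforce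
    have aq: "a\<mu> (jq, cq) \<noteq> 0" using q by (simp add: supp_def qq)
    then have cq1: "cq 1 = \<mu>" and aq': "a (jq, cq) \<noteq> 0" by (auto simp: a\<mu>_def split: if_splits)
    define x where "x = (jq + jn + bil m L cq cn, cq + cn)"
    have v1: "qt_mult m L a\<mu> (ypow n) x = a\<mu> (jq, cq)"
    proof -
      have "qt_mult m L a\<mu> (ypow n) (jq + jn + bil m L cq cn, cq + cn)
          = a\<mu> (jq + jn + bil m L cq cn - jn - bil m L cq cn, cq)"
        by (rule L_min[OF Un[folded cn_def] amc]) (use qmin in \<open>force simp: qq supp_def\<close>)
      then show ?thesis by (simp add: x_def)
    qed
    define ar where "ar = (\<lambda>p. a p - a\<mu> p)"
    have arc: "ar \<in> qt_carrier m" using add_carrier[OF a neg_carrier[OF amc]] by (simp add: ar_def)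
    have asplit: "a = (\<lambda>p. a\<mu> p + ar p)" by (simp add: ar_def)
    have v2: "qt_mult m L ar (ypow n) x = 0"
    proof (rule ccontr)
      assume "qt_mult m L ar (ypow n) x \<noteq> 0"
      then obtain p' q' where pq: "ar p' \<noteq> 0" "ypow n q' \<noteq> 0" "star m L p' q' = x"
        using qt_mult_supp[OF arc ypow_carrier] by blast
      obtain jp' cp' where pp': "p' = (jp', cp')" by fastforce
      obtain jq' cq' where qq': "q' = (jq', cq')" by fastforce
      have "a (jp', cp') \<noteq> 0" "cp' 1 \<noteq> \<mu>" using pq(1)
        by (auto simp: ar_def a\<mu>_def pp' split: if_splits)
      then have "cp' 1 > \<mu>" using \<mu>min by fastforce
      moreover have "cq' 1 = 0" using ypow_c1[OF True] pq(2) by (simp add: qq')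
      moreover have "cp' + cq' = cq + cn" using pq(3) by (simp add: star_def x_def pp' qq')
      then have "cp' 1 + cq' 1 = cq 1 + cn 1" by (metis plus_fun_apply)
      ultimately show False using cq1 cn1 by simp
    qed
    have "qt_mult m L a (ypow n) x = qt_mult m L a\<mu> (ypow n) x + qt_mult m L ar (ypow n) x"
      by (subst asplit, subst qt_distr_l[OF amc arc ypow_carrier]) simp
    then have "qt_mult m L a (ypow n) x \<noteq> 0" using v1 v2 aq by simp
    then have "(cq + cn) 1 \<ge> 0" unfolding x_def by (rule pos)
    then show False using cq1 cn1 \<mu>neg by simp
  qed
qed

end


context seed
begin

abbreviation "GR \<equiv> generate_ring QT HR"

lemma c2_decomp_aux:
  assumes V: "finite V"
  shows "\<forall>f. f \<in> qt_carrier m \<longrightarrow> (\<lambda>(j, c). c 2) ` supp f \<subseteq> V \<longrightarrow> (\<forall>b. comp2 b f \<in> GR) \<longrightarrow> f \<in> GR"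
  using V
proof (induction V rule: finite_induct)
  case empty
  interpret ring QT by (rule qt_ring)
  show ?case
  proof (intro allI impI)
    fix f assume "f \<in> qt_carrier m" "(\<lambda>(j, c). c 2) ` supp f \<subseteq> {}"
    then have "f = (\<lambda>_. 0)" by (auto simp: supp_def)
    then show "f \<in> GR" using zero_in_generate by simp
  qed
next
  case (insert b V)
  interpret ring QT by (rule qt_ring)
  show ?case
  proof (intro allI impI)
    fix f assume f: "f \<in> qt_carrier m" and sf: "(\<lambda>(j, c). c 2) ` supp f \<subseteq> insert b V"
      and cf: "\<forall>b. comp2 b f \<in> GR"
    define f2 where "f2 = (\<lambda>p. f p - comp2 b f p)"
    have f2c: "f2 \<in> qt_carrier m"
      using add_carrier[OF f neg_carrier[OF comp2_carrier[OF f]]] by (simp add: f2_def)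
    have "(\<lambda>(j, c). c 2) ` supp f2 \<subseteq> V"
    proof
      fix x assume "x \<in> (\<lambda>(j, c). c 2) ` supp f2"
      then obtain j c where jc: "x = c 2" "f2 (j, c) \<noteq> 0" by (auto simp: supp_def)
      then have "f (j, c) \<noteq> 0" "c 2 \<noteq> b" by (auto simp: f2_def split: if_splits)
      then have "c 2 \<in> insert b V" using sf by (force simp: supp_def)
      then show "x \<in> V" using jc \<open>c 2 \<noteq> b\<close> by simp
    qed
    moreover have "\<forall>b'. comp2 b' f2 \<in> GR"
    proof
      fix b'
      show "comp2 b' f2 \<in> GR"
      proof (cases "b' = b")
        case True
        then have "comp2 b' f2 = (\<lambda>_. 0)" by (auto simp: f2_def comp2_def)
        then show ?thesis using zero_in_generate by simp
      next
        case False
        then have "comp2 b' f2 = comp2 b' f" by (auto simp: f2_def comp2_def)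
        then show ?thesis using cf by simp
      qed
    qed
    ultimately have g2: "f2 \<in> GR" using insert.IH f2c by simp
    have "f = (\<lambda>p. comp2 b f p + f2 p)" by (auto simp: f2_def)
    then show "f \<in> GR" using generate_ring.eng_add[OF spec[OF cf, of b] g2] by simp
  qed
qed

lemma c2_decomp: "f \<in> qt_carrier m \<Longrightarrow> (\<forall>b. comp2 b f \<in> GR) \<Longrightarrow> f \<in> GR"
  using c2_decomp_aux[of "(\<lambda>(j, c). c 2) ` supp f"] carrier_finite[of f m] by blast

lemma ZP_HR: "ZP m 2 \<subseteq> HR" by (auto simp: HR_def)

lemma ypow_GR: "ypow n \<in> GR"
proof (induction n)
  case 0
  show ?case using generate_ring.one[of QT HR] by (simp add: ypow_0)
next
  case (Suc n)
  have "Yv \<in> GR" by (rule generate_ring.incl) (simp add: HR_def)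
  then show ?case using generate_ring.eng_mult[OF _ Suc.IH] by (simp add: ypow_Suc)
qed

lemma S1_R: 
  assumes f: "f \<in> qt_carrier m" and c: "\<And>j c. f (j, c) \<noteq> 0 \<Longrightarrow> c 1 \<ge> 0 \<and> c 2 \<ge> 0"
  shows "f \<in> GR"
proof (rule gen_decomp[OF m2 ZP_HR HR_c f])
  show "\<forall>j c. f (j, c) \<noteq> 0 \<longrightarrow> (\<exists>j0. sm j0 (mon12 (c 1) (c 2)) \<in> GR)"
    using c monR by blast
qed

lemma main_sub: "generate_ring QT HA \<inter> generate_ring QT HB \<subseteq> GR"
proof
  fix y assume y: "y \<in> generate_ring QT HA \<inter> generate_ring QT HB"
  have yS: "y \<in> S1" using y GA_S1 by blast
  have yc: "y \<in> qt_carrier m" and y1: "\<And>j c. y (j, c) \<noteq> 0 \<Longrightarrow> c 1 \<ge> 0" using yS by (auto simp: S1_def)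
  have yW: "y \<in> Wset" using y GB_W by blast
  have "\<forall>b. comp2 b y \<in> GR"
  proof
    fix b
    show "comp2 b y \<in> GR"
    proof (cases "b \<ge> 0")
      case True
      show ?thesis
      proof (rule S1_R[OF comp2_carrier[OF yc]])
        fix j c assume "comp2 b y (j, c) \<noteq> 0"
        then have "c 2 = b" "y (j, c) \<noteq> 0" by (auto split: if_splits)
        then show "c 1 \<ge> 0 \<and> c 2 \<ge> 0" using y1 True by auto
      qed
    next
      case False
      define k where "k = nat (- b - 1)"
      have bk: "b = - int (Suc k)" using False by (simp add: k_def)
      obtain a where a: "a \<in> T0" "comp2 b y = qt_mult m L a (ypow (Suc k))"
        using W_comp[OF yW, of k] bk by blast
      have ac: "a \<in> qt_carrier m" using a(1) by (simp add: T0_def)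
      have pos: "\<And>j c. qt_mult m L a (ypow (Suc k)) (j, c) \<noteq> 0 \<Longrightarrow> c 1 \<ge> 0"
      proof -
        fix j c assume "qt_mult m L a (ypow (Suc k)) (j, c) \<noteq> 0"
        then have "comp2 b y (j, c) \<noteq> 0" using a(2) by simp
        then have "y (j, c) \<noteq> 0" by (auto split: if_splits)
        then show "c 1 \<ge> 0" by (rule y1)
      qed
      have aR: "a \<in> GR"
      proof (rule S1_R[OF ac])
        fix j c assume nz: "a (j, c) \<noteq> 0"
        have "c 1 \<ge> 0" by (rule lex[of a "Suc k", OF ac _ nz]) (rule pos)
        moreover have "c 2 = 0" using a(1) nz by (auto simp: T0_def)
        ultimately show "c 1 \<ge> 0 \<and> c 2 \<ge> 0" by simp
      qed
      show ?thesis using generate_ring.eng_mult[OF aR ypow_GR] a(2) by simp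
    qed
  qed
  then show "y \<in> GR" by (rule c2_decomp[OF yc])
qed

lemma main_eq: "generate_ring QT HA \<inter> generate_ring QT HB = GR"
  using main_sub GR_sub_GA GR_sub_GB by blast

end

theorem lemma4p3:
  fixes m :: nat and L B :: "nat \<Rightarrow> nat \<Rightarrow> int" and d :: "nat \<Rightarrow> nat"
    and h :: "nat \<Rightarrow> nat \<Rightarrow> int \<Rightarrow> int"
  assumes "quantum_seed m 2 L B d h"
  shows "ZP_adj m 2 L {qX (ebasis 1), qX (ebasis 2), qX (\<lambda>k. - ebasis 2 k)}
           \<inter> ZP_adj m 2 L {qX (ebasis 1), qX (\<lambda>k. - ebasis 1 k), qX (ebasis 2), mut_var m B d h 2}
         = ZP_adj m 2 L {qX (ebasis 1), qX (ebasis 2), mut_var m B d h 2}"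
proof -
  interpret seed m L B d h by (rule seed.intro[OF assms])
  show ?thesis
    using main_eq unfolding ZP_adj_def HA_def HB_def HR_def X1_def X1i_def X2_def X2i_def Yv_def .
qed


end
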